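(* Let $\mathbf A\in\mathbb K^{m\times n}$, $\mathbf b\in\mathbb K^m$, $\mathbf c\in\mathbb K^n$ satisfy assumption (A), and let $\boldsymbol\mu\in\mathbb K$ be positive. Then the problem $$\text{minimize } \mathbf c^T\mathbf x-\boldsymbol\mu\Big(\sum_{j=1}^n\log\mathbf x_j+\sum_{i=1}^m\log\mathbf w_i\Big)\quad\text{s.t. } \mathbf A\mathbf x+\mathbf w=\mathbf b,\ \mathbf x>0,\ \mathbf w>0$$ and the problem $$\text{maximize } -\mathbf b^T\mathbf y+\boldsymbol\mu\Big(\sum_{j=1}^n\log\mathbf s_j+\sum_{i=1}^m\log\mathbf y_i\Big)\quad\text{s.t. } -\mathbf A^T\mathbf y+\mathbf s=\mathbf c,\ \mathbf s>0,\ \mathbf y>0,$$ where the variables range over vectors with entries in $\mathbb K$ and objective values are compared in $H(\bar{\mathbb R}_{\exp})$, each have a unique optimal solution. These solutions are $(\mathbf x^{\boldsymbol\mu},\mathbf w^{\boldsymbol\mu})$ and $(\mathbf y^{\boldsymbol\mu},\mathbf s^{\boldsymbol\mu})$ respectively.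
   Context: $\mathbb K$ is the field of germs at $+\infty$ of real functions definable in $\bar{\mathbb R}^{\mathbb R}$, the ordered real field expanded by the power functions $t\mapsto t^r$ ($r\in\mathbb R$; set to $0$ for $t\le0$). It is real closed, with $\mathbf f>0$ iff $\mathbf f(t)>0$ for large $t$. $\bar{\mathbb R}_{\exp}$ is the o-minimal expansion of the ordered real field by the exponential function. $H(\bar{\mathbb R}_{\exp})$ is the ordered field of germs at $+\infty$ of functions definable in $\bar{\mathbb R}_{\exp}$. It contains $\mathbb K$, and for positive $\mathbf f\in\mathbb K$, $\log\mathbf f$ denotes the germ of $t\mapsto\log \mathbf f(t)$, an element of $H(\bar{\mathbb R}_{\exp})$. Assumption (A): there exist $\mathbf x^\circ,\mathbf w^\circ,\mathbf y^\circ,\mathbf s^\circ$ with positive entries in $\mathbb K$ such that $\mathbf A\mathbf x^\circ+\mathbf w^\circ=\mathbf b$ and $-\mathbf A^T\mathbf y^\circ+\mathbf s^\circ=\mathbf c$. $(\mathbf x^{\boldsymbol\mu},\mathbf w^{\boldsymbol\mu},\mathbf y^{\boldsymbol\mu},\mathbf s^{\boldsymbol\mu})$ denotes the unique solution over $\mathbb K$ (which exists under (A)) of $\mathbf A\mathbf x+\mathbf w=\mathbf b$, $-\mathbf A^T\mathbf y+\mathbf s=\mathbf c$, $\mathbf w_i\mathbf y_i=\boldsymbol\mu$ ($i\in[m]$), $\mathbf x_j\mathbf s_j=\boldsymbol\mu$ ($j\in[n]$), $\mathbf x,\mathbf w,\mathbf y,\mathbf s>0$. *)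

theory Defs
  imports Complex_Main
begin

definition pw :: "real \<Rightarrow> real \<Rightarrow> real" where
  "pw r t = (if t > 0 then exp (r * ln t) else 0)"

datatype tm = Var nat | Cst real | Plus tm tm | Times tm tm | Uminus tm | PowT real tm

datatype fm = Eq tm tm | Lt tm tm | Neg fm | Conj fm fm | Ex nat fm

primrec tval :: "(nat \<Rightarrow> real) \<Rightarrow> tm \<Rightarrow> real" where
  "tval e (Var k) = e k"
| "tval e (Cst a) = a"
| "tval e (Plus s u) = tval e s + tval e u"
| "tval e (Times s u) = tval e s * tval e u"
| "tval e (Uminus s) = - tval e s"
| "tval e (PowT r s) = pw r (tval e s)"

primrec sat :: "(nat \<Rightarrow> real) \<Rightarrow> fm \<Rightarrow> bool" where
  "sat e (Eq s u) = (tval e s = tval e u)"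
| "sat e (Lt s u) = (tval e s < tval e u)"
| "sat e (Neg p) = (\<not> sat e p)"
| "sat e (Conj p q) = (sat e p \<and> sat e q)"
| "sat e (Ex k p) = (\<exists>v. sat (e(k := v)) p)"

text \<open>A function R -> R definable (with parameters) in R^R: its graph is
  defined by a first-order formula with free variables 0 (argument) and 1 (value).
  Elements of the field K are germs at +infinity of such functions; we work with
  representatives.\<close>
definition inK :: "(real \<Rightarrow> real) \<Rightarrow> bool" where
  "inK f \<longleftrightarrow> (\<exists>\<phi>. \<forall>t y. (f t = y) \<longleftrightarrow>
      sat (\<lambda>k. if k = 0 then t else if k = 1 then y else 0) \<phi>)"

definition germ_eq :: "(real \<Rightarrow> real) \<Rightarrow> (real \<Rightarrow> real) \<Rightarrow> bool" where
  "germ_eq f g \<longleftrightarrow> (\<forall>\<^sub>F t in at_top. f t = g t)"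

definition germ_pos :: "(real \<Rightarrow> real) \<Rightarrow> bool" where
  "germ_pos f \<longleftrightarrow> (\<forall>\<^sub>F t in at_top. f t > 0)"

definition germ_le :: "(real \<Rightarrow> real) \<Rightarrow> (real \<Rightarrow> real) \<Rightarrow> bool" where
  "germ_le f g \<longleftrightarrow> (\<forall>\<^sub>F t in at_top. f t \<le> g t)"

type_synonym gvec = "nat \<Rightarrow> real \<Rightarrow> real"
type_synonym gmat = "nat \<Rightarrow> nat \<Rightarrow> real \<Rightarrow> real"

definition vecK :: "nat \<Rightarrow> gvec \<Rightarrow> bool" where
  "vecK k v \<longleftrightarrow> (\<forall>i<k. inK (v i))"

definition vec_pos :: "nat \<Rightarrow> gvec \<Rightarrow> bool" where
  "vec_pos k v \<longleftrightarrow> (\<forall>i<k. germ_pos (v i))"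

definition matK :: "nat \<Rightarrow> nat \<Rightarrow> gmat \<Rightarrow> bool" where
  "matK m n A \<longleftrightarrow> (\<forall>i<m. \<forall>j<n. inK (A i j))"

definition primal_eq :: "nat \<Rightarrow> nat \<Rightarrow> gmat \<Rightarrow> gvec \<Rightarrow> gvec \<Rightarrow> gvec \<Rightarrow> bool" where
  "primal_eq m n A b x w \<longleftrightarrow>
     (\<forall>i<m. germ_eq (\<lambda>t. (\<Sum>j<n. A i j t * x j t) + w i t) (b i))"

definition dual_eq :: "nat \<Rightarrow> nat \<Rightarrow> gmat \<Rightarrow> gvec \<Rightarrow> gvec \<Rightarrow> gvec \<Rightarrow> bool" where
  "dual_eq m n A c y s \<longleftrightarrow>
     (\<forall>j<n. germ_eq (\<lambda>t. - (\<Sum>i<m. A i j t * y i t) + s j t) (c j))"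

definition assumption_A :: "nat \<Rightarrow> nat \<Rightarrow> gmat \<Rightarrow> gvec \<Rightarrow> gvec \<Rightarrow> bool" where
  "assumption_A m n A b c \<longleftrightarrow>
     (\<exists>x w y s. vecK n x \<and> vecK m w \<and> vecK m y \<and> vecK n s \<and>
        vec_pos n x \<and> vec_pos m w \<and> vec_pos m y \<and> vec_pos n s \<and>
        primal_eq m n A b x w \<and> dual_eq m n A c y s)"

definition central_point ::
  "nat \<Rightarrow> nat \<Rightarrow> gmat \<Rightarrow> gvec \<Rightarrow> gvec \<Rightarrow> (real \<Rightarrow> real) \<Rightarrow> gvec \<Rightarrow> gvec \<Rightarrow> gvec \<Rightarrow> gvec \<Rightarrow> bool" where
  "central_point m n A b c \<mu> x w y s \<longleftrightarrow>
     vecK n x \<and> vecK m w \<and> vecK m y \<and> vecK n s \<and>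
     vec_pos n x \<and> vec_pos m w \<and> vec_pos m y \<and> vec_pos n s \<and>
     primal_eq m n A b x w \<and> dual_eq m n A c y s \<and>
     (\<forall>i<m. germ_eq (\<lambda>t. w i t * y i t) \<mu>) \<and>
     (\<forall>j<n. germ_eq (\<lambda>t. x j t * s j t) \<mu>)"

definition primal_feasible :: "nat \<Rightarrow> nat \<Rightarrow> gmat \<Rightarrow> gvec \<Rightarrow> gvec \<Rightarrow> gvec \<Rightarrow> bool" where
  "primal_feasible m n A b x w \<longleftrightarrow>
     vecK n x \<and> vecK m w \<and> vec_pos n x \<and> vec_pos m w \<and> primal_eq m n A b x w"

text \<open>Objective value, as an element of H(R_exp) (a germ at +infinity).\<close>
definition primal_obj :: "nat \<Rightarrow> nat \<Rightarrow> gvec \<Rightarrow> (real \<Rightarrow> real) \<Rightarrow> gvec \<Rightarrow> gvec \<Rightarrow> real \<Rightarrow> real" where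
  "primal_obj m n c \<mu> x w = (\<lambda>t. (\<Sum>j<n. c j t * x j t)
      - \<mu> t * ((\<Sum>j<n. ln (x j t)) + (\<Sum>i<m. ln (w i t))))"

definition primal_optimal ::
  "nat \<Rightarrow> nat \<Rightarrow> gmat \<Rightarrow> gvec \<Rightarrow> gvec \<Rightarrow> (real \<Rightarrow> real) \<Rightarrow> gvec \<Rightarrow> gvec \<Rightarrow> bool" where
  "primal_optimal m n A b c \<mu> x w \<longleftrightarrow> primal_feasible m n A b x w \<and>
     (\<forall>x' w'. primal_feasible m n A b x' w' \<longrightarrow>
        germ_le (primal_obj m n c \<mu> x w) (primal_obj m n c \<mu> x' w'))"

definition dual_feasible :: "nat \<Rightarrow> nat \<Rightarrow> gmat \<Rightarrow> gvec \<Rightarrow> gvec \<Rightarrow> gvec \<Rightarrow> bool" where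
  "dual_feasible m n A c y s \<longleftrightarrow>
     vecK m y \<and> vecK n s \<and> vec_pos m y \<and> vec_pos n s \<and> dual_eq m n A c y s"

definition dual_obj :: "nat \<Rightarrow> nat \<Rightarrow> gvec \<Rightarrow> (real \<Rightarrow> real) \<Rightarrow> gvec \<Rightarrow> gvec \<Rightarrow> real \<Rightarrow> real" where
  "dual_obj m n b \<mu> y s = (\<lambda>t. - (\<Sum>i<m. b i t * y i t)
      + \<mu> t * ((\<Sum>j<n. ln (s j t)) + (\<Sum>i<m. ln (y i t))))"

definition dual_optimal ::
  "nat \<Rightarrow> nat \<Rightarrow> gmat \<Rightarrow> gvec \<Rightarrow> gvec \<Rightarrow> (real \<Rightarrow> real) \<Rightarrow> gvec \<Rightarrow> gvec \<Rightarrow> bool" where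
  "dual_optimal m n A b c \<mu> y s \<longleftrightarrow> dual_feasible m n A c y s \<and>
     (\<forall>y' s'. dual_feasible m n A c y' s' \<longrightarrow>
        germ_le (dual_obj m n b \<mu> y' s') (dual_obj m n b \<mu> y s))"

end

theory Submission
  imports Defs "HOL-Analysis.Analysis"
begin


definition rsys :: "nat \<Rightarrow> nat \<Rightarrow> (nat \<Rightarrow> nat \<Rightarrow> real) \<Rightarrow> (nat \<Rightarrow> real) \<Rightarrow> (nat \<Rightarrow> real) \<Rightarrow> real
   \<Rightarrow> (nat \<Rightarrow> real) \<Rightarrow> (nat \<Rightarrow> real) \<Rightarrow> (nat \<Rightarrow> real) \<Rightarrow> (nat \<Rightarrow> real) \<Rightarrow> bool" where
  "rsys m n A b c mu x w y s \<longleftrightarrow>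
    (\<forall>j<n. x j > 0) \<and> (\<forall>i<m. w i > 0) \<and> (\<forall>i<m. y i > 0) \<and> (\<forall>j<n. s j > 0) \<and>
    (\<forall>i<m. (\<Sum>j<n. A i j * x j) + w i = b i) \<and>
    (\<forall>j<n. - (\<Sum>i<m. A i j * y i) + s j = c j) \<and>
    (\<forall>i<m. w i * y i = mu) \<and> (\<forall>j<n. x j * s j = mu)"

lemma coord_le:
  fixes x s x' :: real
  assumes "x > 0" "s > 0" "x' > 0"
  shows "(x * s) * ln x' \<le> (x * s) * ln x + s * (x' - x)"
proof -
  have "ln x' - ln x \<le> (x' - x)/x" using ln_diff_le assms by blast
  then have "(x * s)*(ln x' - ln x) \<le> (x * s)*((x' - x)/x)"
    using assms by (intro mult_left_mono) auto
  also have "\<dots> = s * (x'-x)" using assms by (simp add: field_simps)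
  finally show ?thesis by (simp add: algebra_simps)
qed

lemma coord_less:
  fixes x s x' :: real
  assumes "x > 0" "s > 0" "x' > 0" "x' \<noteq> x"
  shows "(x * s) * ln x' < (x * s) * ln x + s * (x' - x)"
proof -
  have "ln x' - ln x < (x' - x)/x" using ln_diff_less assms by blast
  then have "(x * s)*(ln x' - ln x) < (x * s)*((x' - x)/x)"
    using assms by (intro mult_strict_left_mono) auto
  also have "\<dots> = s * (x'-x)" using assms by (simp add: field_simps)
  finally show ?thesis by (simp add: algebra_simps)
qed

lemma coord_D:
  fixes x s x' mu :: real
  assumes "x > 0" "s > 0" "x' > 0" "x * s = mu"
  shows "0 \<le> - mu * ln x' + mu * ln x + s * (x' - x)"
    and "- mu * ln x' + mu * ln x + s * (x' - x) = 0 \<Longrightarrow> x' = x"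
proof -
  have "(x * s) * ln x' \<le> (x * s) * ln x + s * (x' - x)" using assms by (intro coord_le) auto
  then show "0 \<le> - mu * ln x' + mu * ln x + s * (x' - x)" using assms(4) by simp
  show "- mu * ln x' + mu * ln x + s * (x' - x) = 0 \<Longrightarrow> x' = x"
  proof (rule ccontr)
    assume "- mu * ln x' + mu * ln x + s * (x' - x) = 0" "x' \<noteq> x"
    moreover have "(x * s) * ln x' < (x * s) * ln x + s * (x' - x)" using assms \<open>x' \<noteq> x\<close> by (intro coord_less) auto
    ultimately show False using assms(4) by simp
  qed
qed

lemma prod_sign:
  fixes a a' p p' :: real
  assumes "a > 0" "a' > 0" "p > 0" "p' > 0" "a * p = a' * p'"
  shows "(a - a') * (p - p') \<le> 0" and "(a - a') * (p - p') = 0 \<Longrightarrow> a = a' \<and> p = p'"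
proof -
  have c1: "a > a' \<Longrightarrow> p < p'"
  proof (rule ccontr)
    assume "a > a'" "\<not> p < p'"
    have "a' * p' < a * p'" using \<open>a > a'\<close> assms(4) by (rule mult_strict_right_mono)
    moreover have "a * p' \<le> a * p" using \<open>\<not> p < p'\<close> assms(1) by (simp add: mult_left_mono)
    ultimately show False using assms by linarith
  qed
  have c2: "a < a' \<Longrightarrow> p > p'"
  proof (rule ccontr)
    assume "a < a'" "\<not> p > p'"
    have "a * p < a' * p" using \<open>a < a'\<close> assms(3) by (rule mult_strict_right_mono)
    moreover have "a' * p \<le> a' * p'" using \<open>\<not> p > p'\<close> assms(2) by (simp add: mult_left_mono)
    ultimately show False using assms by linarith
  qed
  have c3: "a = a' \<Longrightarrow> p = p'" using assms by auto
  show "(a - a') * (p - p') \<le> 0"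
    using c1 c2 c3 by (cases "a < a'"; cases "a > a'") (auto simp: mult_le_0_iff)
  show "(a - a') * (p - p') = 0 \<Longrightarrow> a = a' \<and> p = p'"
    using c1 c2 c3 by (metis linorder_neqE_linordered_idom mult_eq_0_iff order_less_irrefl right_minus_eq)
qed

lemma sum_swap_A:
  fixes A :: "nat \<Rightarrow> nat \<Rightarrow> real"
  shows "(\<Sum>j<n. u j * (\<Sum>i<m. A i j * v i)) = (\<Sum>i<m. v i * (\<Sum>j<n. A i j * u j))"
  unfolding sum_distrib_left
  by (subst sum.swap) (simp add: mult_ac)

lemma rsysD:
  assumes "rsys m n A b c mu x w y s"
  shows "\<And>j. j<n \<Longrightarrow> x j > 0" "\<And>i. i<m \<Longrightarrow> w i > 0" "\<And>i. i<m \<Longrightarrow> y i > 0" "\<And>j. j<n \<Longrightarrow> s j > 0"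
    "\<And>i. i<m \<Longrightarrow> (\<Sum>j<n. A i j * x j) + w i = b i"
    "\<And>j. j<n \<Longrightarrow> - (\<Sum>i<m. A i j * y i) + s j = c j"
    "\<And>i. i<m \<Longrightarrow> w i * y i = mu" "\<And>j. j<n \<Longrightarrow> x j * s j = mu"
  using assms unfolding rsys_def by blast+

lemma rsys_unique:
  assumes r1: "rsys m n A b c mu x w y s" and r2: "rsys m n A b c mu x' w' y' s'"
  shows "(\<forall>j<n. x' j = x j) \<and> (\<forall>i<m. w' i = w i) \<and> (\<forall>i<m. y' i = y i) \<and> (\<forall>j<n. s' j = s j)"
proof -
  have pe: "(\<Sum>j<n. A i j * (x j - x' j)) = - (w i - w' i)" if "i < m" for i
  proof -
    have "(\<Sum>j<n. A i j * (x j - x' j)) = (\<Sum>j<n. A i j * x j) - (\<Sum>j<n. A i j * x' j)"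
      by (simp add: right_diff_distrib sum_subtractf)
    then show ?thesis using rsysD(5)[OF r1 that] rsysD(5)[OF r2 that] by linarith
  qed
  have de: "(\<Sum>i<m. A i j * (y i - y' i)) = s j - s' j" if "j < n" for j
  proof -
    have "(\<Sum>i<m. A i j * (y i - y' i)) = (\<Sum>i<m. A i j * y i) - (\<Sum>i<m. A i j * y' i)"
      by (simp add: right_diff_distrib sum_subtractf)
    then show ?thesis using rsysD(6)[OF r1 that] rsysD(6)[OF r2 that] by linarith
  qed
  have "(\<Sum>j<n. (x j - x' j) * (s j - s' j)) = (\<Sum>j<n. (x j - x' j) * (\<Sum>i<m. A i j * (y i - y' i)))"
    using de by simp
  also have "\<dots> = (\<Sum>i<m. (y i - y' i) * (\<Sum>j<n. A i j * (x j - x' j)))"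
    by (rule sum_swap_A)
  also have "\<dots> = (\<Sum>i<m. - ((w i - w' i) * (y i - y' i)))"
  proof (rule sum.cong[OF refl])
    fix i assume "i \<in> {..<m}"
    then have "(\<Sum>j<n. A i j * (x j - x' j)) = - (w i - w' i)" using pe by simp
    then show "(y i - y' i) * (\<Sum>j<n. A i j * (x j - x' j)) = - ((w i - w' i) * (y i - y' i))"
      by (metis minus_mult_right mult.commute)
  qed
  finally have key: "(\<Sum>j<n. - ((x j - x' j) * (s j - s' j))) + (\<Sum>i<m. - ((w i - w' i) * (y i - y' i))) = 0"
    by (simp add: sum_negf)
  have T: "(x j - x' j) * (s j - s' j) \<le> 0" "(x j - x' j) * (s j - s' j) = 0 \<Longrightarrow> x j = x' j \<and> s j = s' j"
    if "j < n" for j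
  proof -
    have a: "x j > 0" "x' j > 0" "s j > 0" "s' j > 0" using rsysD(1,4)[OF r1 that] rsysD(1,4)[OF r2 that] by auto
    have "x j * s j = mu" "x' j * s' j = mu" using rsysD(8)[OF r1 that] rsysD(8)[OF r2 that] by auto
    then have "x j * s j = x' j * s' j" by simp
    with a show "(x j - x' j) * (s j - s' j) \<le> 0" "(x j - x' j) * (s j - s' j) = 0 \<Longrightarrow> x j = x' j \<and> s j = s' j"
      using prod_sign[of "x j" "x' j" "s j" "s' j"] by blast+
  qed
  have U: "(w i - w' i) * (y i - y' i) \<le> 0" "(w i - w' i) * (y i - y' i) = 0 \<Longrightarrow> w i = w' i \<and> y i = y' i"
    if "i < m" for i
  proof -
    have a: "w i > 0" "w' i > 0" "y i > 0" "y' i > 0" using rsysD(2,3)[OF r1 that] rsysD(2,3)[OF r2 that] by auto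
    have "w i * y i = mu" "w' i * y' i = mu" using rsysD(7)[OF r1 that] rsysD(7)[OF r2 that] by auto
    then have "w i * y i = w' i * y' i" by simp
    with a show "(w i - w' i) * (y i - y' i) \<le> 0" "(w i - w' i) * (y i - y' i) = 0 \<Longrightarrow> w i = w' i \<and> y i = y' i"
      using prod_sign[of "w i" "w' i" "y i" "y' i"] by blast+
  qed
  have S1: "(\<Sum>j<n. - ((x j - x' j) * (s j - s' j))) \<ge> 0" by (rule sum_nonneg) (use T(1) in force)
  have S2: "(\<Sum>i<m. - ((w i - w' i) * (y i - y' i))) \<ge> 0" by (rule sum_nonneg) (use U(1) in force)
  have Z1: "(\<Sum>j<n. - ((x j - x' j) * (s j - s' j))) = 0" using key S1 S2 by linarith
  have Z2: "(\<Sum>i<m. - ((w i - w' i) * (y i - y' i))) = 0" using key S1 S2 by linarith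
  have Zx: "\<forall>j\<in>{..<n}. - ((x j - x' j) * (s j - s' j)) = 0"
    using Z1 T(1) by (subst sum_nonneg_eq_0_iff[symmetric]) auto
  have Zw: "\<forall>i\<in>{..<m}. - ((w i - w' i) * (y i - y' i)) = 0"
    using Z2 U(1) by (subst sum_nonneg_eq_0_iff[symmetric]) auto
  have ex: "x j = x' j \<and> s j = s' j" if j: "j < n" for j
  proof -
    have "(x j - x' j) * (s j - s' j) = 0" using Zx j by simp
    then show ?thesis using T(2)[OF j] by blast
  qed
  have ew: "w i = w' i \<and> y i = y' i" if i: "i < m" for i
  proof -
    have "(w i - w' i) * (y i - y' i) = 0" using Zw i by simp
    then show ?thesis using U(2)[OF i] by blast
  qed
  show ?thesis using ex ew by simp
qed

definition pobjr :: "nat \<Rightarrow> nat \<Rightarrow> (nat \<Rightarrow> real) \<Rightarrow> real \<Rightarrow> (nat \<Rightarrow> real) \<Rightarrow> (nat \<Rightarrow> real) \<Rightarrow> real" where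
  "pobjr m n c mu x w = (\<Sum>j<n. c j * x j) - mu * ((\<Sum>j<n. ln (x j)) + (\<Sum>i<m. ln (w i)))"

definition dobjr :: "nat \<Rightarrow> nat \<Rightarrow> (nat \<Rightarrow> real) \<Rightarrow> real \<Rightarrow> (nat \<Rightarrow> real) \<Rightarrow> (nat \<Rightarrow> real) \<Rightarrow> real" where
  "dobjr m n b mu y s = - (\<Sum>i<m. b i * y i) + mu * ((\<Sum>j<n. ln (s j)) + (\<Sum>i<m. ln (y i)))"

lemma primal_pt:
  assumes r: "rsys m n A b c mu x w y s"
    and px: "\<forall>j<n. x' j > 0" and pw: "\<forall>i<m. w' i > 0"
    and pe: "\<forall>i<m. (\<Sum>j<n. A i j * x' j) + w' i = b i"
  shows "pobjr m n c mu x w \<le> pobjr m n c mu x' w'"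
    and "pobjr m n c mu x' w' \<le> pobjr m n c mu x w \<Longrightarrow> (\<forall>j<n. x' j = x j) \<and> (\<forall>i<m. w' i = w i)"
proof -

  define D where "D j = - mu * ln (x' j) + mu * ln (x j) + s j * (x' j - x j)" for j
  define E where "E i = - mu * ln (w' i) + mu * ln (w i) + y i * (w' i - w i)" for i
  have D0: "D j \<ge> 0" if "j < n" for j
    using coord_D(1)[OF rsysD(1)[OF r that] rsysD(4)[OF r that] px[rule_format, OF that] rsysD(8)[OF r that]] unfolding D_def .
  have D1: "D j = 0 \<Longrightarrow> x' j = x j" if "j < n" for j
    using coord_D(2)[OF rsysD(1)[OF r that] rsysD(4)[OF r that] px[rule_format, OF that] rsysD(8)[OF r that]] unfolding D_def .
  have E0: "E i \<ge> 0" if "i < m" for i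
    using coord_D(1)[OF rsysD(2)[OF r that] rsysD(3)[OF r that] pw[rule_format, OF that] rsysD(7)[OF r that]] unfolding E_def .
  have E1: "E i = 0 \<Longrightarrow> w' i = w i" if "i < m" for i
    using coord_D(2)[OF rsysD(2)[OF r that] rsysD(3)[OF r that] pw[rule_format, OF that] rsysD(7)[OF r that]] unfolding E_def .
  have pe': "(\<Sum>j<n. A i j * (x' j - x j)) = - (w' i - w i)" if "i < m" for i
  proof -
    have "(\<Sum>j<n. A i j * (x' j - x j)) = (\<Sum>j<n. A i j * x' j) - (\<Sum>j<n. A i j * x j)"
      by (simp add: right_diff_distrib sum_subtractf)
    then show ?thesis using rsysD(5)[OF r that] pe[rule_format, OF that] by linarith
  qed
  have cs: "c j - s j = - (\<Sum>i<m. A i j * y i)" if "j < n" for j using rsysD(6)[OF r that] by linarith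
  have "(\<Sum>j<n. (c j - s j) * (x' j - x j)) = (\<Sum>j<n. - ((x' j - x j) * (\<Sum>i<m. A i j * y i)))"
  proof (rule sum.cong[OF refl])
    fix j assume "j \<in> {..<n}"
    then have "c j - s j = - (\<Sum>i<m. A i j * y i)" using cs by simp
    then show "(c j - s j) * (x' j - x j) = - ((x' j - x j) * (\<Sum>i<m. A i j * y i))"
      by simp
  qed
  also have "\<dots> = - (\<Sum>j<n. (x' j - x j) * (\<Sum>i<m. A i j * y i))"
    by (simp add: sum_negf)
  also have "\<dots> = - (\<Sum>i<m. y i * (\<Sum>j<n. A i j * (x' j - x j)))"
    by (rule arg_cong[where f=uminus], rule sum_swap_A)
  also have "\<dots> = (\<Sum>i<m. - (y i * (\<Sum>j<n. A i j * (x' j - x j))))"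
    by (simp add: sum_negf)
  also have "\<dots> = (\<Sum>i<m. y i * (w' i - w i))"
  proof (rule sum.cong[OF refl])
    fix i assume "i \<in> {..<m}"
    then have "(\<Sum>j<n. A i j * (x' j - x j)) = - (w' i - w i)" using pe' by simp
    then show "- (y i * (\<Sum>j<n. A i j * (x' j - x j))) = y i * (w' i - w i)"
      by (simp only: mult_minus_right minus_minus)
  qed
  finally have id3: "(\<Sum>j<n. (c j - s j) * (x' j - x j)) = (\<Sum>i<m. y i * (w' i - w i))" .
  have id1: "(\<Sum>j<n. D j) = - mu * (\<Sum>j<n. ln (x' j)) + mu * (\<Sum>j<n. ln (x j)) + (\<Sum>j<n. s j * (x' j - x j))"
    unfolding D_def by (simp only: sum.distrib sum_distrib_left[symmetric])
  have id2: "(\<Sum>i<m. E i) = - mu * (\<Sum>i<m. ln (w' i)) + mu * (\<Sum>i<m. ln (w i)) + (\<Sum>i<m. y i * (w' i - w i))"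
    unfolding E_def by (simp only: sum.distrib sum_distrib_left[symmetric])
  have id4: "(\<Sum>j<n. (c j - s j) * (x' j - x j)) = (\<Sum>j<n. c j * x' j) - (\<Sum>j<n. c j * x j) - (\<Sum>j<n. s j * (x' j - x j))"
    by (simp add: algebra_simps sum_subtractf sum.distrib)
  have diff: "pobjr m n c mu x' w' - pobjr m n c mu x w = (\<Sum>j<n. D j) + (\<Sum>i<m. E i)"
  proof -
    have "pobjr m n c mu x' w' - pobjr m n c mu x w = ((\<Sum>j<n. c j * x' j) - (\<Sum>j<n. c j * x j))
       - mu * (\<Sum>j<n. ln (x' j)) + mu * (\<Sum>j<n. ln (x j)) - mu * (\<Sum>i<m. ln (w' i)) + mu * (\<Sum>i<m. ln (w i))"
      unfolding pobjr_def by (simp only: algebra_simps)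
    then show ?thesis using id1 id2 id3 id4 by linarith
  qed
  have SD: "(\<Sum>j<n. D j) \<ge> 0" by (intro sum_nonneg) (simp add: D0)
  have SE: "(\<Sum>i<m. E i) \<ge> 0" by (intro sum_nonneg) (simp add: E0)
  show "pobjr m n c mu x w \<le> pobjr m n c mu x' w'" using diff SD SE by linarith
  assume le: "pobjr m n c mu x' w' \<le> pobjr m n c mu x w"
  have Z1: "(\<Sum>j<n. D j) = 0" and Z2: "(\<Sum>i<m. E i) = 0" using diff SD SE le by linarith+
  have "\<forall>j\<in>{..<n}. D j = 0" using Z1 D0 by (subst sum_nonneg_eq_0_iff[symmetric]) auto
  moreover have "\<forall>i\<in>{..<m}. E i = 0" using Z2 E0 by (subst sum_nonneg_eq_0_iff[symmetric]) auto
  ultimately show "(\<forall>j<n. x' j = x j) \<and> (\<forall>i<m. w' i = w i)" using D1 E1 by blast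
qed

lemma dual_pt:
  assumes r: "rsys m n A b c mu x w y s"
    and py: "\<forall>i<m. y' i > 0" and ps: "\<forall>j<n. s' j > 0"
    and de: "\<forall>j<n. - (\<Sum>i<m. A i j * y' i) + s' j = c j"
  shows "dobjr m n b mu y' s' \<le> dobjr m n b mu y s"
    and "dobjr m n b mu y s \<le> dobjr m n b mu y' s' \<Longrightarrow> (\<forall>i<m. y' i = y i) \<and> (\<forall>j<n. s' j = s j)"
proof -

  define F where "F j = - mu * ln (s' j) + mu * ln (s j) + x j * (s' j - s j)" for j
  define G where "G i = - mu * ln (y' i) + mu * ln (y i) + w i * (y' i - y i)" for i
  have mux: "mu = s j * x j" if "j < n" for j using rsysD(8)[OF r that] by (simp add: mult.commute)
  have muw: "mu = y i * w i" if "i < m" for i using rsysD(7)[OF r that] by (simp add: mult.commute)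
  have F0: "F j \<ge> 0" if "j < n" for j
    using coord_D(1)[OF rsysD(4)[OF r that] rsysD(1)[OF r that] ps[rule_format, OF that] mux[OF that, symmetric]] unfolding F_def .
  have F1: "F j = 0 \<Longrightarrow> s' j = s j" if "j < n" for j
    using coord_D(2)[OF rsysD(4)[OF r that] rsysD(1)[OF r that] ps[rule_format, OF that] mux[OF that, symmetric]] unfolding F_def .
  have G0: "G i \<ge> 0" if "i < m" for i
    using coord_D(1)[OF rsysD(3)[OF r that] rsysD(2)[OF r that] py[rule_format, OF that] muw[OF that, symmetric]] unfolding G_def .
  have G1: "G i = 0 \<Longrightarrow> y' i = y i" if "i < m" for i
    using coord_D(2)[OF rsysD(3)[OF r that] rsysD(2)[OF r that] py[rule_format, OF that] muw[OF that, symmetric]] unfolding G_def .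
  have de': "(\<Sum>i<m. A i j * (y' i - y i)) = s' j - s j" if "j < n" for j
  proof -
    have "(\<Sum>i<m. A i j * (y' i - y i)) = (\<Sum>i<m. A i j * y' i) - (\<Sum>i<m. A i j * y i)"
      by (simp add: right_diff_distrib sum_subtractf)
    then show ?thesis using rsysD(6)[OF r that] de[rule_format, OF that] by linarith
  qed
  have bw: "(\<Sum>j<n. A i j * x j) = b i - w i" if "i < m" for i using rsysD(5)[OF r that] by linarith
  have "(\<Sum>j<n. x j * (s' j - s j)) = (\<Sum>j<n. x j * (\<Sum>i<m. A i j * (y' i - y i)))"
    using de' by simp
  also have "\<dots> = (\<Sum>i<m. (y' i - y i) * (\<Sum>j<n. A i j * x j))"
    by (rule sum_swap_A)
  also have "\<dots> = (\<Sum>i<m. (y' i - y i) * (b i - w i))"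
    using bw by simp
  finally have id3: "(\<Sum>j<n. x j * (s' j - s j)) = (\<Sum>i<m. (y' i - y i) * (b i - w i))" .
  have id1: "(\<Sum>j<n. F j) = - mu * (\<Sum>j<n. ln (s' j)) + mu * (\<Sum>j<n. ln (s j)) + (\<Sum>j<n. x j * (s' j - s j))"
    unfolding F_def by (simp only: sum.distrib sum_distrib_left[symmetric])
  have id2: "(\<Sum>i<m. G i) = - mu * (\<Sum>i<m. ln (y' i)) + mu * (\<Sum>i<m. ln (y i)) + (\<Sum>i<m. w i * (y' i - y i))"
    unfolding G_def by (simp only: sum.distrib sum_distrib_left[symmetric])
  have id4: "(\<Sum>i<m. (y' i - y i) * (b i - w i)) = (\<Sum>i<m. b i * y' i) - (\<Sum>i<m. b i * y i) - (\<Sum>i<m. w i * (y' i - y i))"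
    by (simp add: algebra_simps sum_subtractf sum.distrib)
  have diff: "dobjr m n b mu y s - dobjr m n b mu y' s' = (\<Sum>j<n. F j) + (\<Sum>i<m. G i)"
  proof -
    have "dobjr m n b mu y s - dobjr m n b mu y' s' = ((\<Sum>i<m. b i * y' i) - (\<Sum>i<m. b i * y i))
       - mu * (\<Sum>j<n. ln (s' j)) + mu * (\<Sum>j<n. ln (s j)) - mu * (\<Sum>i<m. ln (y' i)) + mu * (\<Sum>i<m. ln (y i))"
      unfolding dobjr_def by (simp only: algebra_simps)
    then show ?thesis using id1 id2 id3 id4 by linarith
  qed
  have SD: "(\<Sum>j<n. F j) \<ge> 0" by (intro sum_nonneg) (simp add: F0)
  have SE: "(\<Sum>i<m. G i) \<ge> 0" by (intro sum_nonneg) (simp add: G0)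
  show "dobjr m n b mu y' s' \<le> dobjr m n b mu y s" using diff SD SE by linarith
  assume le: "dobjr m n b mu y s \<le> dobjr m n b mu y' s'"
  have Z1: "(\<Sum>j<n. F j) = 0" and Z2: "(\<Sum>i<m. G i) = 0" using diff SD SE le by linarith+
  have "\<forall>j\<in>{..<n}. F j = 0" using Z1 F0 by (subst sum_nonneg_eq_0_iff[symmetric]) auto
  moreover have "\<forall>i\<in>{..<m}. G i = 0" using Z2 G0 by (subst sum_nonneg_eq_0_iff[symmetric]) auto
  ultimately show "(\<forall>i<m. y' i = y i) \<and> (\<forall>j<n. s' j = s j)" using F1 G1 by blast
qed


lemma deriv_dir:
  fixes A :: "nat \<Rightarrow> nat \<Rightarrow> real" and b c z d :: "nat \<Rightarrow> real" and mu :: real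
  assumes zp: "\<forall>k<n. z k > 0" and wp: "\<forall>i<m. b i - (\<Sum>k<n. A i k * z k) > 0"
  shows "((\<lambda>\<tau>. (\<Sum>k<n. c k * (z k + \<tau> * d k)) - mu * ((\<Sum>k<n. ln (z k + \<tau> * d k)) +
            (\<Sum>i<m. ln (b i - (\<Sum>k<n. A i k * (z k + \<tau> * d k)))))) has_field_derivative
     ((\<Sum>k<n. c k * d k) - mu * ((\<Sum>k<n. d k / z k) +
            (\<Sum>i<m. (- (\<Sum>k<n. A i k * d k)) / (b i - (\<Sum>k<n. A i k * z k)))))) (at 0)"
proof -
  have h1: "((\<lambda>\<tau>. c k * (z k + \<tau> * d k)) has_field_derivative c k * d k) (at 0)" for k
    by (auto intro!: derivative_eq_intros)
  have h2: "((\<lambda>\<tau>. ln (z k + \<tau> * d k)) has_field_derivative d k / z k) (at 0)" if "k \<in> {..<n}" for k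
  proof -
    have "z k > 0" using zp that by auto
    then show ?thesis by (auto intro!: derivative_eq_intros)
  qed
  have h4: "((\<lambda>\<tau>. (\<Sum>k<n. A i k * (z k + \<tau> * d k))) has_field_derivative (\<Sum>k<n. A i k * d k)) (at 0)" for i
    by (auto intro!: derivative_eq_intros simp: mult.commute)
  have h3: "((\<lambda>\<tau>. ln (b i - (\<Sum>k<n. A i k * (z k + \<tau> * d k)))) has_field_derivative
      (- (\<Sum>k<n. A i k * d k)) / (b i - (\<Sum>k<n. A i k * z k))) (at 0)" if "i \<in> {..<m}" for i
  proof -
    have pos: "b i - (\<Sum>k<n. A i k * (z k + 0 * d k)) > 0" using wp that by auto
    then show ?thesis by (auto intro!: derivative_eq_intros simp: mult.commute field_simps)
  qed
  show ?thesis
    by (intro DERIV_diff DERIV_cmult DERIV_add DERIV_sum h1 h2 h3) auto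
qed

lemma coord_cont [continuous_intros]: "continuous_on S (\<lambda>x::nat \<Rightarrow> real. x i)"
  by (rule continuous_on_subset[OF continuous_on_product_coordinates]) auto

lemma h_lower:
  fixes a u mu :: real
  assumes "a > 0" "u > 0" "mu > 0"
  shows "a * u - mu * ln u \<ge> mu - mu * ln (mu / a)"
proof -
  have "ln u - ln (mu / a) \<le> (u - mu / a) / (mu / a)" using assms by (intro ln_diff_le) auto
  also have "\<dots> = a * u / mu - 1" using assms by (simp add: field_simps)
  finally have "mu * (ln u - ln (mu / a)) \<le> mu * (a * u / mu - 1)" using assms by (intro mult_left_mono) auto
  also have "\<dots> = a * u - mu" using assms by (simp add: field_simps)
  finally show ?thesis by (simp add: algebra_simps)
qed

lemma h_upper:
  fixes a u mu R :: real
  assumes "a > 0" "u > 0" "mu > 0" "a * u - mu * ln u \<le> R"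
  shows "u \<le> 2 * (R + mu * ln (2 * mu / a) - mu) / a"
proof -
  have "ln u - ln (2 * mu / a) \<le> (u - 2 * mu / a) / (2 * mu / a)" using assms by (intro ln_diff_le) auto
  also have "\<dots> = a * u / (2 * mu) - 1" using assms by (simp add: field_simps)
  finally have "mu * (ln u - ln (2 * mu / a)) \<le> mu * (a * u / (2 * mu) - 1)" using assms by (intro mult_left_mono) auto
  also have "\<dots> = a * u / 2 - mu" using assms by (simp add: field_simps)
  finally have "a * u / 2 \<le> R + mu * ln (2 * mu / a) - mu" using assms(4) by (simp add: algebra_simps)
  then show ?thesis using assms by (simp add: field_simps)
qed

lemma h_lowerbd:
  fixes a u mu R :: real
  assumes "a > 0" "u > 0" "mu > 0" "a * u - mu * ln u \<le> R"
  shows "exp (- R / mu) \<le> u"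
proof -
  have "a * u > 0" using assms by simp
  then have "- mu * ln u < R" using assms(4) by linarith
  then have "- R / mu < ln u" using assms by (simp add: field_simps)
  then have "exp (- R / mu) < exp (ln u)" by simp
  then show ?thesis using assms by simp
qed


lemma central_exists:
  fixes A :: "nat \<Rightarrow> nat \<Rightarrow> real" and b c x0 w0 y0 s0 :: "nat \<Rightarrow> real" and mu :: real
  assumes mu: "mu > 0"
    and x0p: "\<forall>j<n. x0 j > 0" and w0p: "\<forall>i<m. w0 i > 0" and y0p: "\<forall>i<m. y0 i > 0" and s0p: "\<forall>j<n. s0 j > 0"
    and pe0: "\<forall>i<m. (\<Sum>j<n. A i j * x0 j) + w0 i = b i"
    and de0: "\<forall>j<n. - (\<Sum>i<m. A i j * y0 i) + s0 j = c j"
  shows "\<exists>x w y s. rsys m n A b c mu x w y s"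
proof -
  define W where "W z i = b i - (\<Sum>j<n. A i j * z j)" for z :: "nat \<Rightarrow> real" and i
  define feas where "feas z \<longleftrightarrow> (\<forall>j<n. z j > 0) \<and> (\<forall>i<m. W z i > 0)" for z
  define f where "f z = (\<Sum>j<n. c j * z j) - mu * ((\<Sum>j<n. ln (z j)) + (\<Sum>i<m. ln (W z i)))" for z
  define h where "h a u = a * u - mu * ln u" for a u :: real
  define \<beta> where "\<beta> a = mu - mu * ln (mu / a)" for a :: real
  have fid: "f z = (\<Sum>j<n. h (s0 j) (z j)) + (\<Sum>i<m. h (y0 i) (W z i)) - (\<Sum>i<m. b i * y0 i)" for z
  proof -
    have e1: "(\<Sum>j<n. c j * z j) = (\<Sum>j<n. s0 j * z j - z j * (\<Sum>i<m. A i j * y0 i))"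
    proof (rule sum.cong[OF refl])
      fix j assume "j \<in> {..<n}"
      then have "c j = s0 j - (\<Sum>i<m. A i j * y0 i)" using de0 by force
      then show "c j * z j = s0 j * z j - z j * (\<Sum>i<m. A i j * y0 i)" by (metis left_diff_distrib mult.commute)
    qed
    have e2: "(\<Sum>j<n. s0 j * z j - z j * (\<Sum>i<m. A i j * y0 i)) = (\<Sum>j<n. s0 j * z j) - (\<Sum>j<n. z j * (\<Sum>i<m. A i j * y0 i))"
      by (rule sum_subtractf)
    have e3: "(\<Sum>j<n. z j * (\<Sum>i<m. A i j * y0 i)) = (\<Sum>i<m. y0 i * (\<Sum>j<n. A i j * z j))" by (rule sum_swap_A)
    have e4: "(\<Sum>i<m. y0 i * (\<Sum>j<n. A i j * z j)) = (\<Sum>i<m. b i * y0 i - y0 i * W z i)"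
      unfolding W_def by (rule sum.cong[OF refl]) (simp add: algebra_simps)
    have e5: "(\<Sum>i<m. b i * y0 i - y0 i * W z i) = (\<Sum>i<m. b i * y0 i) - (\<Sum>i<m. y0 i * W z i)"
      by (rule sum_subtractf)
    have e6: "(\<Sum>j<n. h (s0 j) (z j)) = (\<Sum>j<n. s0 j * z j) - mu * (\<Sum>j<n. ln (z j))"
      unfolding h_def by (simp only: sum_subtractf sum_distrib_left[symmetric])
    have e7: "(\<Sum>i<m. h (y0 i) (W z i)) = (\<Sum>i<m. y0 i * W z i) - mu * (\<Sum>i<m. ln (W z i))"
      unfolding h_def by (simp only: sum_subtractf sum_distrib_left[symmetric])
    have e8: "f z = (\<Sum>j<n. c j * z j) - mu * (\<Sum>j<n. ln (z j)) - mu * (\<Sum>i<m. ln (W z i))"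
      unfolding f_def by (simp only: distrib_left diff_diff_eq)
    show ?thesis using e1 e2 e3 e4 e5 e6 e7 e8 by linarith
  qed
  have hlow: "\<beta> a \<le> h a u" if "a > 0" "u > 0" for a u
    unfolding \<beta>_def h_def using h_lower[OF that mu] .
  define x0z where "x0z j = (if j < n then x0 j else 0)" for j
  define R0 where "R0 = f x0z + (\<Sum>i<m. b i * y0 i)"
  define B where "B = (\<Sum>j<n. \<bar>\<beta> (s0 j)\<bar>) + (\<Sum>i<m. \<bar>\<beta> (y0 i)\<bar>)"
  define R where "R = R0 + B"
  have Wx0z: "W x0z i = w0 i" if "i < m" for i
  proof -
    have "(\<Sum>j<n. A i j * x0z j) = (\<Sum>j<n. A i j * x0 j)" unfolding x0z_def by (rule sum.cong) auto
    then show ?thesis unfolding W_def using pe0 that by force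
  qed
  have feas0: "feas x0z" unfolding feas_def using Wx0z x0p w0p by (auto simp: x0z_def)
  have level: "(\<forall>j<n. h (s0 j) (z j) \<le> R) \<and> (\<forall>i<m. h (y0 i) (W z i) \<le> R)"
    if fz: "feas z" "f z \<le> f x0z" for z
  proof -
    have zp: "z j > 0" if "j < n" for j using fz(1) that unfolding feas_def by blast
    have Wp: "W z i > 0" if "i < m" for i using fz(1) that unfolding feas_def by blast
    have tot: "(\<Sum>j<n. h (s0 j) (z j)) + (\<Sum>i<m. h (y0 i) (W z i)) \<le> R0"
      using fid[of z] fz(2) unfolding R0_def by linarith
    have gj: "0 \<le> h (s0 j) (z j) + \<bar>\<beta> (s0 j)\<bar>" if "j < n" for j
      using hlow[of "s0 j" "z j"] s0p zp that by force
    have gi: "0 \<le> h (y0 i) (W z i) + \<bar>\<beta> (y0 i)\<bar>" if "i < m" for i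
      using hlow[of "y0 i" "W z i"] y0p Wp that by force
    have SJ: "(\<Sum>j<n. h (s0 j) (z j) + \<bar>\<beta> (s0 j)\<bar>) = (\<Sum>j<n. h (s0 j) (z j)) + (\<Sum>j<n. \<bar>\<beta> (s0 j)\<bar>)"
      by (rule sum.distrib)
    have SI: "(\<Sum>i<m. h (y0 i) (W z i) + \<bar>\<beta> (y0 i)\<bar>) = (\<Sum>i<m. h (y0 i) (W z i)) + (\<Sum>i<m. \<bar>\<beta> (y0 i)\<bar>)"
      by (rule sum.distrib)
    have SJ0: "0 \<le> (\<Sum>j<n. h (s0 j) (z j) + \<bar>\<beta> (s0 j)\<bar>)" by (rule sum_nonneg) (use gj in force)
    have SI0: "0 \<le> (\<Sum>i<m. h (y0 i) (W z i) + \<bar>\<beta> (y0 i)\<bar>)" by (rule sum_nonneg) (use gi in force)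
    have "h (s0 j) (z j) \<le> R" if j: "j < n" for j
    proof -
      have "h (s0 j) (z j) + \<bar>\<beta> (s0 j)\<bar> \<le> (\<Sum>j<n. h (s0 j) (z j) + \<bar>\<beta> (s0 j)\<bar>)"
        by (rule member_le_sum) (use j gj in auto)
      then show ?thesis using SJ SI SI0 tot unfolding R_def B_def by linarith
    qed
    moreover have "h (y0 i) (W z i) \<le> R" if i: "i < m" for i
    proof -
      have "h (y0 i) (W z i) + \<bar>\<beta> (y0 i)\<bar> \<le> (\<Sum>i<m. h (y0 i) (W z i) + \<bar>\<beta> (y0 i)\<bar>)"
        by (rule member_le_sum) (use i gi in auto)
      then show ?thesis using SJ SI SJ0 tot unfolding R_def B_def by linarith
    qed
    ultimately show ?thesis by blast
  qed
  define Mf where "Mf a = 2 * (R + mu * ln (2 * mu / a) - mu) / a" for a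
  define \<epsilon> where "\<epsilon> = exp (- R / mu)"
  define M where "M = (\<Sum>j<n. \<bar>Mf (s0 j)\<bar>) + (\<Sum>i<m. \<bar>Mf (y0 i)\<bar>)"
  have epos: "\<epsilon> > 0" unfolding \<epsilon>_def by simp
  have ubd: "\<epsilon> \<le> u \<and> u \<le> \<bar>Mf a\<bar>" if "a > 0" "u > 0" "h a u \<le> R" for a u
  proof -
    have "u \<le> Mf a" unfolding Mf_def using h_upper[OF that(1,2) mu] that(3) unfolding h_def by blast
    moreover have "\<epsilon> \<le> u" unfolding \<epsilon>_def using h_lowerbd[OF that(1,2) mu] that(3) unfolding h_def by blast
    ultimately show ?thesis by linarith
  qed
  have MJ: "\<bar>Mf (s0 j)\<bar> \<le> M" if "j < n" for j
  proof -
    have "\<bar>Mf (s0 j)\<bar> \<le> (\<Sum>j<n. \<bar>Mf (s0 j)\<bar>)" by (rule member_le_sum) (use that in auto)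
    moreover have "0 \<le> (\<Sum>i<m. \<bar>Mf (y0 i)\<bar>)" by (rule sum_nonneg) auto
    ultimately show ?thesis unfolding M_def by linarith
  qed
  have MI: "\<bar>Mf (y0 i)\<bar> \<le> M" if "i < m" for i
  proof -
    have "\<bar>Mf (y0 i)\<bar> \<le> (\<Sum>i<m. \<bar>Mf (y0 i)\<bar>)" by (rule member_le_sum) (use that in auto)
    moreover have "0 \<le> (\<Sum>j<n. \<bar>Mf (s0 j)\<bar>)" by (rule sum_nonneg) auto
    ultimately show ?thesis unfolding M_def by linarith
  qed
  define S where "S j = (if j < n then {\<epsilon>..M} else {0::real})" for j
  define K where "K = Pi UNIV S \<inter> {z. \<forall>i<m. \<epsilon> \<le> W z i \<and> W z i \<le> M}"
  have inK: "z \<in> K" if fz: "feas z" "\<forall>j. n \<le> j \<longrightarrow> z j = 0" "f z \<le> f x0z" for z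
  proof -
    have L: "(\<forall>j<n. h (s0 j) (z j) \<le> R) \<and> (\<forall>i<m. h (y0 i) (W z i) \<le> R)" using level[OF fz(1,3)] .
    have "z j \<in> S j" for j
    proof (cases "j < n")
      case True
      have "z j > 0" using fz(1) True unfolding feas_def by blast
      then have "\<epsilon> \<le> z j \<and> z j \<le> \<bar>Mf (s0 j)\<bar>" using ubd[of "s0 j" "z j"] s0p L True by blast
      then show ?thesis using MJ[OF True] True unfolding S_def by auto
    next
      case False
      then show ?thesis using fz(2) unfolding S_def by auto
    qed
    moreover have "\<epsilon> \<le> W z i \<and> W z i \<le> M" if "i < m" for i
    proof -
      have "W z i > 0" using fz(1) that unfolding feas_def by blast
      then have "\<epsilon> \<le> W z i \<and> W z i \<le> \<bar>Mf (y0 i)\<bar>" using ubd[of "y0 i" "W z i"] y0p L that by blast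
      then show ?thesis using MI[OF that] by auto
    qed
    ultimately show ?thesis unfolding K_def by auto
  qed
  have x0K: "x0z \<in> K" using inK[OF feas0] by (auto simp: x0z_def)
  have Kfeas: "feas z \<and> (\<forall>j. n \<le> j \<longrightarrow> z j = 0)" if "z \<in> K" for z
  proof -
    have a: "z j \<in> S j" for j using that unfolding K_def by auto
    have "z j > 0" if "j < n" for j using a[of j] epos that unfolding S_def by auto
    moreover have "W z i > 0" if "i < m" for i using that \<open>z \<in> K\<close> epos unfolding K_def by force
    moreover have "z j = 0" if "n \<le> j" for j using a[of j] that unfolding S_def by auto
    ultimately show ?thesis unfolding feas_def by blast
  qed
  have contW: "continuous_on UNIV (\<lambda>z. W z i)" for i
    unfolding W_def by (intro continuous_intros)
  have cK: "compact K"
  proof -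
    have "compactin (product_topology (\<lambda>_. euclidean) UNIV) (PiE UNIV S)"
      by (subst compactin_PiE) (auto simp: S_def)
    then have c1: "compact (Pi UNIV S)" by (simp add: euclidean_product_topology PiE_UNIV_domain)
    have eq: "{z. \<forall>i<m. \<epsilon> \<le> W z i \<and> W z i \<le> M} = (\<Inter>i\<in>{..<m}. {z. \<epsilon> \<le> W z i} \<inter> {z. W z i \<le> M})"
      by auto
    have "closed {z. \<forall>i<m. \<epsilon> \<le> W z i \<and> W z i \<le> M}"
      unfolding eq by (intro closed_INT closed_Int ballI closed_Collect_le contW continuous_on_const)
    then show ?thesis unfolding K_def using c1 by (rule compact_Int_closed[rotated])
  qed
  have cf: "continuous_on K f"
    unfolding f_def W_def
  proof (intro continuous_intros ballI)
    fix z j assume "z \<in> K" "j \<in> {..<n}"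
    then show "z j \<noteq> 0" using Kfeas[of z] unfolding feas_def by auto
  next
    fix z i assume "z \<in> K" "i \<in> {..<m}"
    then show "b i - (\<Sum>j<n. A i j * z j) \<noteq> 0" using Kfeas[of z] unfolding feas_def W_def by auto
  qed
  obtain zs where zsK: "zs \<in> K" and zsmin: "\<forall>y\<in>K. f zs \<le> f y"
    using continuous_attains_inf[OF cK _ cf] x0K by blast
  have zmin: "f zs \<le> f z" if "feas z" "\<forall>j. n \<le> j \<longrightarrow> z j = 0" for z
  proof (cases "f z \<le> f x0z")
    case True
    then show ?thesis using inK[OF that True] zsmin by blast
  next
    case False
    then show ?thesis using zsmin x0K by force
  qed
  have zsf: "feas zs" and zs0: "\<forall>j. n \<le> j \<longrightarrow> zs j = 0" using Kfeas[OF zsK] by auto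
  have zsp: "zs j > 0" if "j < n" for j using zsf that unfolding feas_def by blast
  have Wsp: "W zs i > 0" if "i < m" for i using zsf that unfolding feas_def by blast
  have FOC: "c j - mu * (1 / zs j + (\<Sum>i<m. - A i j / W zs i)) = 0" if j: "j < n" for j
  proof -
    define d where "d k = (if k = j then 1 else 0 :: real)" for k
    define Dv where "Dv = (\<Sum>k<n. c k * d k) - mu * ((\<Sum>k<n. d k / zs k) +
            (\<Sum>i<m. (- (\<Sum>k<n. A i k * d k)) / (b i - (\<Sum>k<n. A i k * zs k))))"
    have der: "((\<lambda>\<tau>. f (\<lambda>k. zs k + \<tau> * d k)) has_field_derivative Dv) (at 0)"
      unfolding f_def W_def Dv_def
      by (rule deriv_dir) (use zsp Wsp in \<open>auto simp: W_def\<close>)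
    have ev1: "eventually (\<lambda>\<tau>. \<forall>k\<in>{..<n}. zs k + \<tau> * d k > 0) (at (0::real))"
    proof (rule eventually_ball_finite)
      show "finite {..<n}" by simp
      show "\<forall>k\<in>{..<n}. eventually (\<lambda>\<tau>. zs k + \<tau> * d k > 0) (at 0)"
      proof
        fix k assume "k \<in> {..<n}"
        have "((\<lambda>\<tau>. zs k + \<tau> * d k) \<longlongrightarrow> zs k + 0 * d k) (at (0::real))"
          by (intro tendsto_intros)
        then show "eventually (\<lambda>\<tau>. zs k + \<tau> * d k > 0) (at 0)"
          using zsp \<open>k \<in> {..<n}\<close> by (intro order_tendstoD(1)) auto
      qed
    qed
    have ev2: "eventually (\<lambda>\<tau>. \<forall>i\<in>{..<m}. W (\<lambda>k. zs k + \<tau> * d k) i > 0) (at (0::real))"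
    proof (rule eventually_ball_finite)
      show "finite {..<m}" by simp
      show "\<forall>i\<in>{..<m}. eventually (\<lambda>\<tau>. W (\<lambda>k. zs k + \<tau> * d k) i > 0) (at 0)"
      proof
        fix i assume i: "i \<in> {..<m}"
        have "((\<lambda>\<tau>. W (\<lambda>k. zs k + \<tau> * d k) i) \<longlongrightarrow> b i - (\<Sum>k<n. A i k * (zs k + 0 * d k))) (at (0::real))"
          unfolding W_def by (intro tendsto_intros)
        moreover have "b i - (\<Sum>k<n. A i k * (zs k + 0 * d k)) = W zs i" unfolding W_def by simp
        ultimately show "eventually (\<lambda>\<tau>. W (\<lambda>k. zs k + \<tau> * d k) i > 0) (at 0)"
          using Wsp i by (intro order_tendstoD(1)) auto
      qed
    qed
    have "eventually (\<lambda>\<tau>. feas (\<lambda>k. zs k + \<tau> * d k)) (at (0::real))"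
      using eventually_conj[OF ev1 ev2] unfolding feas_def by (rule eventually_mono) auto
    then obtain \<delta> where dpos: "\<delta> > 0" and dfe: "\<forall>\<tau>. \<tau> \<noteq> 0 \<and> dist \<tau> 0 < \<delta> \<longrightarrow> feas (\<lambda>k. zs k + \<tau> * d k)"
      unfolding eventually_at by auto
    have "\<forall>\<tau>. \<bar>0 - \<tau>\<bar> < \<delta> \<longrightarrow> f (\<lambda>k. zs k + 0 * d k) \<le> f (\<lambda>k. zs k + \<tau> * d k)"
    proof (intro allI impI)
      fix \<tau> :: real assume "\<bar>0 - \<tau>\<bar> < \<delta>"
      show "f (\<lambda>k. zs k + 0 * d k) \<le> f (\<lambda>k. zs k + \<tau> * d k)"
      proof (cases "\<tau> = 0")
        case True then show ?thesis by simp
      next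
        case False
        then have "feas (\<lambda>k. zs k + \<tau> * d k)" using dfe \<open>\<bar>0 - \<tau>\<bar> < \<delta>\<close> by (auto simp: dist_real_def)
        moreover have "\<forall>k. n \<le> k \<longrightarrow> zs k + \<tau> * d k = 0" using zs0 j by (auto simp: d_def)
        ultimately show ?thesis using zmin by simp
      qed
    qed
    then have "Dv = 0" using DERIV_local_min[OF der dpos] by blast
    moreover have "(\<Sum>k<n. c k * d k) = c j" using j by (simp add: d_def if_distrib cong: if_cong)
    moreover have "(\<Sum>k<n. d k / zs k) = 1 / zs j" using j by (subst sum.cong[OF refl, of _ _ "\<lambda>k. if k = j then 1 / zs k else 0"]) (auto simp: d_def)
    moreover have "(\<Sum>k<n. A i k * d k) = A i j" for i using j by (simp add: d_def if_distrib cong: if_cong)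
    ultimately show ?thesis unfolding Dv_def W_def by simp
  qed
  define y where "y i = mu / W zs i" for i
  define s where "s j = mu / zs j" for j
  have "rsys m n A b c mu zs (W zs) y s"
    unfolding rsys_def
  proof (intro conjI allI impI)
    fix j assume j: "j < n"
    show "zs j > 0" using zsp j .
    show "s j > 0" unfolding s_def using zsp j mu by simp
    show "zs j * s j = mu" unfolding s_def using zsp[OF j] by simp
    have sj: "(\<Sum>i<m. A i j * y i) = mu * (\<Sum>i<m. A i j / W zs i)"
      unfolding y_def sum_distrib_left by (rule sum.cong) auto
    have "(\<Sum>i<m. - A i j / W zs i) = - (\<Sum>i<m. A i j / W zs i)"
      by (simp add: sum_negf[symmetric])
    then show "- (\<Sum>i<m. A i j * y i) + s j = c j" using FOC[OF j] sj unfolding s_def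
      by (simp add: algebra_simps)
  next
    fix i assume i: "i < m"
    show "W zs i > 0" using Wsp i .
    show "y i > 0" unfolding y_def using Wsp i mu by simp
    show "(\<Sum>j<n. A i j * zs j) + W zs i = b i" unfolding W_def by simp
    show "W zs i * y i = mu" unfolding y_def using Wsp[OF i] by simp
  qed
  then show ?thesis by blast
qed


fun rent :: "(nat \<Rightarrow> nat) \<Rightarrow> tm \<Rightarrow> tm" where
  "rent \<rho> (Var k) = Var (\<rho> k)"
| "rent \<rho> (Cst a) = Cst a"
| "rent \<rho> (Plus s u) = Plus (rent \<rho> s) (rent \<rho> u)"
| "rent \<rho> (Times s u) = Times (rent \<rho> s) (rent \<rho> u)"
| "rent \<rho> (Uminus s) = Uminus (rent \<rho> s)"
| "rent \<rho> (PowT r s) = PowT r (rent \<rho> s)"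

fun renf :: "(nat \<Rightarrow> nat) \<Rightarrow> fm \<Rightarrow> fm" where
  "renf \<rho> (Eq s u) = Eq (rent \<rho> s) (rent \<rho> u)"
| "renf \<rho> (Lt s u) = Lt (rent \<rho> s) (rent \<rho> u)"
| "renf \<rho> (Neg p) = Neg (renf \<rho> p)"
| "renf \<rho> (Conj p q) = Conj (renf \<rho> p) (renf \<rho> q)"
| "renf \<rho> (Ex k p) = Ex (\<rho> k) (renf \<rho> p)"

lemma tval_rent: "tval e (rent \<rho> s) = tval (e \<circ> \<rho>) s"
  by (induction s) auto

lemma upd_comp_inj: "inj \<rho> \<Longrightarrow> (e(\<rho> k := v)) \<circ> \<rho> = (e \<circ> \<rho>)(k := v)"
  by (rule ext) (auto simp: inj_eq)

lemma sat_renf: "inj \<rho> \<Longrightarrow> sat e (renf \<rho> p) = sat (e \<circ> \<rho>) p"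
proof (induction p arbitrary: e)
  case (Ex k p)
  have "sat e (renf \<rho> (Ex k p)) \<longleftrightarrow> (\<exists>v. sat (e(\<rho> k := v)) (renf \<rho> p))" by simp
  also have "\<dots> \<longleftrightarrow> (\<exists>v. sat ((e(\<rho> k := v)) \<circ> \<rho>) p)" using Ex.IH Ex.prems by blast
  also have "\<dots> \<longleftrightarrow> (\<exists>v. sat ((e \<circ> \<rho>)(k := v)) p)" by (simp only: upd_comp_inj[OF Ex.prems])
  also have "\<dots> \<longleftrightarrow> sat (e \<circ> \<rho>) (Ex k p)" by (simp only: sat.simps)
  finally show ?case .
qed (auto simp: tval_rent)

fun Exs :: "nat list \<Rightarrow> fm \<Rightarrow> fm" where
  "Exs [] p = p"
| "Exs (v # vs) p = Ex v (Exs vs p)"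

lemma sat_Exs: "sat e (Exs vs p) \<longleftrightarrow> (\<exists>g. (\<forall>k. k \<notin> set vs \<longrightarrow> g k = e k) \<and> sat g p)"
proof (induction vs arbitrary: e)
  case Nil
  show ?case
  proof
    assume "sat e (Exs [] p)" then show "\<exists>g. (\<forall>k. k \<notin> set [] \<longrightarrow> g k = e k) \<and> sat g p" by auto
  next
    assume "\<exists>g. (\<forall>k. k \<notin> set [] \<longrightarrow> g k = e k) \<and> sat g p"
    then obtain g where "\<forall>k. g k = e k" "sat g p" by auto
    then have "g = e" by auto
    then show "sat e (Exs [] p)" using \<open>sat g p\<close> by simp
  qed
next
  case (Cons v vs)
  show ?case
  proof
    assume "sat e (Exs (v # vs) p)"
    then obtain a where "sat (e(v := a)) (Exs vs p)" by auto
    then obtain g where "\<forall>k. k \<notin> set vs \<longrightarrow> g k = (e(v := a)) k" "sat g p" using Cons by blast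
    then show "\<exists>g. (\<forall>k. k \<notin> set (v # vs) \<longrightarrow> g k = e k) \<and> sat g p" by (intro exI[of _ g]) auto
  next
    assume "\<exists>g. (\<forall>k. k \<notin> set (v # vs) \<longrightarrow> g k = e k) \<and> sat g p"
    then obtain g where g: "\<forall>k. k \<notin> set (v # vs) \<longrightarrow> g k = e k" "sat g p" by blast
    then have "\<forall>k. k \<notin> set vs \<longrightarrow> g k = (e(v := g v)) k" by auto
    then have "sat (e(v := g v)) (Exs vs p)" using Cons g(2) by blast
    then show "sat e (Exs (v # vs) p)" by auto
  qed
qed

fun Conjs :: "fm list \<Rightarrow> fm" where
  "Conjs [] = Eq (Cst 0) (Cst 0)"
| "Conjs (p # ps) = Conj p (Conjs ps)"

lemma sat_Conjs: "sat e (Conjs ps) \<longleftrightarrow> (\<forall>p\<in>set ps. sat e p)"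
  by (induction ps) auto

lemma sat_Conjs_map: "sat e (Conjs (map f [0..<n])) \<longleftrightarrow> (\<forall>j<n. sat e (f j))"
  by (auto simp: sat_Conjs)

fun Sums :: "tm list \<Rightarrow> tm" where
  "Sums [] = Cst 0"
| "Sums (t # ts) = Plus t (Sums ts)"

lemma tval_Sums: "tval e (Sums ts) = sum_list (map (tval e) ts)"
  by (induction ts) auto

lemma sum_list_map_upt: "sum_list (map h [0..<n]) = (\<Sum>j<n. h j)"
  by (induction n) auto

lemma tval_Sums_map: "tval e (Sums (map f [0..<n])) = (\<Sum>j<n. tval e (f j))"
  by (simp add: tval_Sums sum_list_map_upt o_def)

definition Disj :: "fm \<Rightarrow> fm \<Rightarrow> fm" where "Disj p q = Neg (Conj (Neg p) (Neg q))"

lemma sat_Disj: "sat e (Disj p q) \<longleftrightarrow> sat e p \<or> sat e q"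
  by (simp add: Disj_def)

definition ev :: "real \<Rightarrow> real \<Rightarrow> nat \<Rightarrow> real" where
  "ev t y = (\<lambda>k. if k = 0 then t else if k = 1 then y else 0)"


definition oB :: "nat \<Rightarrow> nat \<Rightarrow> nat" where "oB m n = 2 + m*n"
definition oC :: "nat \<Rightarrow> nat \<Rightarrow> nat" where "oC m n = 2 + m*n + m"
definition vmu :: "nat \<Rightarrow> nat \<Rightarrow> nat" where "vmu m n = 2 + m*n + m + n"
definition oX :: "nat \<Rightarrow> nat \<Rightarrow> nat" where "oX m n = 3 + m*n + m + n"
definition oW :: "nat \<Rightarrow> nat \<Rightarrow> nat" where "oW m n = 3 + m*n + m + 2*n"
definition oY :: "nat \<Rightarrow> nat \<Rightarrow> nat" where "oY m n = 3 + m*n + 2*m + 2*n"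
definition oS :: "nat \<Rightarrow> nat \<Rightarrow> nat" where "oS m n = 3 + m*n + 3*m + 2*n"
definition NN :: "nat \<Rightarrow> nat \<Rightarrow> nat" where "NN m n = 3 + m*n + 3*m + 3*n"

definition vA :: "nat \<Rightarrow> nat \<Rightarrow> nat \<Rightarrow> nat \<Rightarrow> nat" where "vA m n i j = 2 + i*n + j"

lemmas lay_defs = oB_def oC_def vmu_def oX_def oW_def oY_def oS_def NN_def

definition dec :: "nat \<Rightarrow> nat \<Rightarrow> (nat \<Rightarrow> nat \<Rightarrow> real) \<Rightarrow> (nat \<Rightarrow> real) \<Rightarrow> (nat \<Rightarrow> real) \<Rightarrow> real
   \<Rightarrow> (nat \<Rightarrow> real) \<Rightarrow> (nat \<Rightarrow> real) \<Rightarrow> (nat \<Rightarrow> real) \<Rightarrow> (nat \<Rightarrow> real) \<Rightarrow> nat \<Rightarrow> real" where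
  "dec m n a bb cc mu x w y s k =
    (if k < oB m n then a ((k-2) div n) ((k-2) mod n)
     else if k < oC m n then bb (k - oB m n)
     else if k < vmu m n then cc (k - oC m n)
     else if k = vmu m n then mu
     else if k < oW m n then x (k - oX m n)
     else if k < oY m n then w (k - oW m n)
     else if k < oS m n then y (k - oY m n)
     else s (k - oS m n))"

lemma vA_lt: fixes i m j n :: nat shows "i < m \<Longrightarrow> j < n \<Longrightarrow> i * n + j < m * n"
proof -
  assume "i < m" "j < n"
  then have "i * n + j < i * n + n" by simp
  also have "\<dots> = Suc i * n" by simp
  also have "\<dots> \<le> m * n" using \<open>i < m\<close> by (intro mult_le_mono1) simp
  finally show ?thesis .
qed

lemma vA_bounds: "i < m \<Longrightarrow> j < n \<Longrightarrow> 2 \<le> vA m n i j \<and> vA m n i j < oB m n"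
  using vA_lt[of i m j n] by (simp add: vA_def oB_def)

lemma dec_A: "i < m \<Longrightarrow> j < n \<Longrightarrow> dec m n a bb cc mu x w y s (vA m n i j) = a i j"
proof -
  assume ij: "i < m" "j < n"
  have "(i * n + j) div n = i" "(i * n + j) mod n = j" using ij by auto
  then show ?thesis using vA_bounds[OF ij] unfolding dec_def by (simp add: vA_def)
qed

lemma dec_b: "i < m \<Longrightarrow> dec m n a bb cc mu x w y s (oB m n + i) = bb i"
  unfolding dec_def by (simp add: lay_defs)
lemma dec_c: "j < n \<Longrightarrow> dec m n a bb cc mu x w y s (oC m n + j) = cc j"
  unfolding dec_def by (simp add: lay_defs)
lemma dec_mu: "dec m n a bb cc mu x w y s (vmu m n) = mu"
  unfolding dec_def by (simp add: lay_defs)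
lemma dec_x: "j < n \<Longrightarrow> dec m n a bb cc mu x w y s (oX m n + j) = x j"
  unfolding dec_def by (simp add: lay_defs)
lemma dec_w: "i < m \<Longrightarrow> dec m n a bb cc mu x w y s (oW m n + i) = w i"
  unfolding dec_def by (simp add: lay_defs)
lemma dec_y: "i < m \<Longrightarrow> dec m n a bb cc mu x w y s (oY m n + i) = y i"
  unfolding dec_def by (simp add: lay_defs)
lemma dec_s: "j < n \<Longrightarrow> dec m n a bb cc mu x w y s (oS m n + j) = s j"
  unfolding dec_def by (simp add: lay_defs)

lemma rsys_cong:
  assumes "\<forall>i<m. \<forall>j<n. A i j = A' i j" "\<forall>i<m. b i = b' i" "\<forall>j<n. c j = c' j"
    "\<forall>j<n. x j = x' j" "\<forall>i<m. w i = w' i" "\<forall>i<m. y i = y' i" "\<forall>j<n. s j = s' j" "mu = mu'"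
  shows "rsys m n A b c mu x w y s = rsys m n A' b' c' mu' x' w' y' s'"
proof -
  have s1: "(\<Sum>j<n. A i j * x j) = (\<Sum>j<n. A' i j * x' j)" if "i < m" for i
    using assms that by (intro sum.cong) auto
  have s2: "(\<Sum>i<m. A i j * y i) = (\<Sum>i<m. A' i j * y' i)" if "j < n" for j
    using assms that by (intro sum.cong) auto
  show ?thesis unfolding rsys_def using assms s1 s2 by auto
qed

definition rho :: "nat \<Rightarrow> nat \<Rightarrow> nat \<Rightarrow> nat \<Rightarrow> nat" where
  "rho m n v k = (if k = 0 then 0 else if k = 1 then v else k + NN m n)"

lemma sat_ren_def:
  assumes "2 \<le> v" "v < NN m n" "\<forall>k\<ge>NN m n. g k = 0"
  shows "sat g (renf (rho m n v) \<phi>) = sat (ev (g 0) (g v)) \<phi>"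
proof -
  have inj: "inj (rho m n v)"
    by (rule injI) (use assms in \<open>auto simp: rho_def split: if_splits\<close>)
  have "g \<circ> rho m n v = ev (g 0) (g v)"
    by (rule ext) (use assms in \<open>auto simp: rho_def ev_def\<close>)
  then show ?thesis using sat_renf[OF inj] by simp
qed

definition DataF :: "nat \<Rightarrow> nat \<Rightarrow> (nat \<Rightarrow> nat \<Rightarrow> fm) \<Rightarrow> (nat \<Rightarrow> fm) \<Rightarrow> (nat \<Rightarrow> fm) \<Rightarrow> fm \<Rightarrow> fm" where
  "DataF m n \<phi>A \<phi>b \<phi>c \<phi>m =
    Conj (Conjs (map (\<lambda>i. Conjs (map (\<lambda>j. renf (rho m n (vA m n i j)) (\<phi>A i j)) [0..<n])) [0..<m]))
    (Conj (Conjs (map (\<lambda>i. renf (rho m n (oB m n + i)) (\<phi>b i)) [0..<m]))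
    (Conj (Conjs (map (\<lambda>j. renf (rho m n (oC m n + j)) (\<phi>c j)) [0..<n]))
      (renf (rho m n (vmu m n)) \<phi>m)))"

definition dataeq :: "nat \<Rightarrow> nat \<Rightarrow> gmat \<Rightarrow> gvec \<Rightarrow> gvec \<Rightarrow> (real \<Rightarrow> real) \<Rightarrow> real \<Rightarrow> (nat \<Rightarrow> real) \<Rightarrow> bool" where
  "dataeq m n A b c mu t g \<longleftrightarrow> (\<forall>i<m. \<forall>j<n. g (vA m n i j) = A i j t) \<and> (\<forall>i<m. g (oB m n + i) = b i t)
     \<and> (\<forall>j<n. g (oC m n + j) = c j t) \<and> g (vmu m n) = mu t"

definition defs :: "(real \<Rightarrow> real) \<Rightarrow> fm \<Rightarrow> bool" where
  "defs F \<phi> \<longleftrightarrow> (\<forall>t y. (F t = y) \<longleftrightarrow> sat (ev t y) \<phi>)"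

lemma sat_DataF:
  assumes dA: "\<forall>i<m. \<forall>j<n. defs (A i j) (\<phi>A i j)" and dB: "\<forall>i<m. defs (b i) (\<phi>b i)"
    and dC: "\<forall>j<n. defs (c j) (\<phi>c j)" and dM: "defs mu \<phi>m"
    and g: "\<forall>k\<ge>NN m n. g k = 0"
  shows "sat g (DataF m n \<phi>A \<phi>b \<phi>c \<phi>m) \<longleftrightarrow> dataeq m n A b c mu (g 0) g"
proof -
  have a: "sat g (renf (rho m n (vA m n i j)) (\<phi>A i j)) \<longleftrightarrow> g (vA m n i j) = A i j (g 0)" if "i < m" "j < n" for i j
  proof -
    have "2 \<le> vA m n i j" "vA m n i j < NN m n" using vA_bounds[OF that] by (auto simp: lay_defs)
    then show ?thesis using sat_ren_def[OF _ _ g] dA that unfolding defs_def by metis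
  qed
  have b: "sat g (renf (rho m n (oB m n + i)) (\<phi>b i)) \<longleftrightarrow> g (oB m n + i) = b i (g 0)" if "i < m" for i
  proof -
    have "2 \<le> oB m n + i" "oB m n + i < NN m n" using that by (auto simp: lay_defs)
    then show ?thesis using sat_ren_def[OF _ _ g] dB that unfolding defs_def by metis
  qed
  have c: "sat g (renf (rho m n (oC m n + j)) (\<phi>c j)) \<longleftrightarrow> g (oC m n + j) = c j (g 0)" if "j < n" for j
  proof -
    have "2 \<le> oC m n + j" "oC m n + j < NN m n" using that by (auto simp: lay_defs)
    then show ?thesis using sat_ren_def[OF _ _ g] dC that unfolding defs_def by metis
  qed
  have d: "sat g (renf (rho m n (vmu m n)) \<phi>m) \<longleftrightarrow> g (vmu m n) = mu (g 0)"
  proof -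
    have "2 \<le> vmu m n" "vmu m n < NN m n" by (auto simp: lay_defs)
    then show ?thesis using sat_ren_def[OF _ _ g] dM unfolding defs_def by metis
  qed
  show ?thesis unfolding DataF_def dataeq_def sat.simps sat_Conjs_map using a b c d by auto
qed

definition SysF :: "nat \<Rightarrow> nat \<Rightarrow> fm" where
  "SysF m n =
    Conj (Conjs (map (\<lambda>j. Lt (Cst 0) (Var (oX m n + j))) [0..<n]))
   (Conj (Conjs (map (\<lambda>i. Lt (Cst 0) (Var (oW m n + i))) [0..<m]))
   (Conj (Conjs (map (\<lambda>i. Lt (Cst 0) (Var (oY m n + i))) [0..<m]))
   (Conj (Conjs (map (\<lambda>j. Lt (Cst 0) (Var (oS m n + j))) [0..<n]))
   (Conj (Conjs (map (\<lambda>i. Eq (Plus (Sums (map (\<lambda>j. Times (Var (vA m n i j)) (Var (oX m n + j))) [0..<n])) (Var (oW m n + i))) (Var (oB m n + i))) [0..<m]))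
   (Conj (Conjs (map (\<lambda>j. Eq (Plus (Uminus (Sums (map (\<lambda>i. Times (Var (vA m n i j)) (Var (oY m n + i))) [0..<m]))) (Var (oS m n + j))) (Var (oC m n + j))) [0..<n]))
   (Conj (Conjs (map (\<lambda>i. Eq (Times (Var (oW m n + i)) (Var (oY m n + i))) (Var (vmu m n))) [0..<m]))
         (Conjs (map (\<lambda>j. Eq (Times (Var (oX m n + j)) (Var (oS m n + j))) (Var (vmu m n))) [0..<n]))))))))"

lemma sat_SysF: "sat g (SysF m n) \<longleftrightarrow> rsys m n (\<lambda>i j. g (vA m n i j)) (\<lambda>i. g (oB m n + i)) (\<lambda>j. g (oC m n + j)) (g (vmu m n))
   (\<lambda>j. g (oX m n + j)) (\<lambda>i. g (oW m n + i)) (\<lambda>i. g (oY m n + i)) (\<lambda>j. g (oS m n + j))"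
  unfolding SysF_def rsys_def sat.simps sat_Conjs_map by (simp add: tval_Sums_map)

definition RSt :: "nat \<Rightarrow> nat \<Rightarrow> gmat \<Rightarrow> gvec \<Rightarrow> gvec \<Rightarrow> (real \<Rightarrow> real) \<Rightarrow> real
   \<Rightarrow> (nat \<Rightarrow> real) \<times> (nat \<Rightarrow> real) \<times> (nat \<Rightarrow> real) \<times> (nat \<Rightarrow> real) \<Rightarrow> bool" where
  "RSt m n A b c mu t q = (case q of (x, w, y, s) \<Rightarrow> rsys m n (\<lambda>i j. A i j t) (\<lambda>i. b i t) (\<lambda>j. c j t) (mu t) x w y s)"

definition extr :: "nat \<Rightarrow> nat \<Rightarrow> (nat \<Rightarrow> real) \<Rightarrow> (nat \<Rightarrow> real) \<times> (nat \<Rightarrow> real) \<times> (nat \<Rightarrow> real) \<times> (nat \<Rightarrow> real)" where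
  "extr m n g = ((\<lambda>j. g (oX m n + j)), (\<lambda>i. g (oW m n + i)), (\<lambda>i. g (oY m n + i)), (\<lambda>j. g (oS m n + j)))"

lemma sys_RS:
  assumes "dataeq m n A b c mu t g"
  shows "sat g (SysF m n) \<longleftrightarrow> RSt m n A b c mu t (extr m n g)"
  unfolding sat_SysF RSt_def extr_def split
  by (rule rsys_cong) (use assms in \<open>auto simp: dataeq_def\<close>)


definition PhiF :: "nat \<Rightarrow> nat \<Rightarrow> (nat \<Rightarrow> nat \<Rightarrow> fm) \<Rightarrow> (nat \<Rightarrow> fm) \<Rightarrow> (nat \<Rightarrow> fm) \<Rightarrow> fm \<Rightarrow> nat \<Rightarrow> fm" where
  "PhiF m n \<phi>A \<phi>b \<phi>c \<phi>m v = Disj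
    (Exs [2..<oX m n] (Conj (DataF m n \<phi>A \<phi>b \<phi>c \<phi>m) (Exs [oX m n..<NN m n] (Conj (SysF m n) (Eq (Var v) (Var 1))))))
    (Conj (Exs [2..<oX m n] (Conj (DataF m n \<phi>A \<phi>b \<phi>c \<phi>m) (Neg (Exs [oX m n..<NN m n] (SysF m n))))) (Eq (Var 1) (Cst 0)))"

lemma data_lt:
  shows "i < m \<Longrightarrow> j < n \<Longrightarrow> vA m n i j < oX m n" "i < m \<Longrightarrow> oB m n + i < oX m n"
    "j < n \<Longrightarrow> oC m n + j < oX m n" "vmu m n < oX m n"
  using vA_bounds[of i m j n] by (auto simp: lay_defs)

lemma dataeq_keep:
  assumes "dataeq m n A b c mu t g" "\<forall>k<oX m n. g' k = g k"
  shows "dataeq m n A b c mu t g'"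
  using assms data_lt unfolding dataeq_def by metis

lemma dataeq_dec:
  assumes as: "\<forall>k. 2 \<le> k \<and> k < oX m n \<longrightarrow> g k = dec m n (\<lambda>i j. A i j t) (\<lambda>i. b i t) (\<lambda>j. c j t) (mu t) x w y s k"
  shows "dataeq m n A b c mu t g"
  unfolding dataeq_def
proof (intro conjI allI impI)
  fix i j assume ij: "i < m" "j < n"
  have "2 \<le> vA m n i j \<and> vA m n i j < oX m n" using vA_bounds[OF ij] data_lt(1)[OF ij] by simp
  then show "g (vA m n i j) = A i j t" using as dec_A[OF ij] by simp
next
  fix i assume i: "i < m"
  have "2 \<le> oB m n + i \<and> oB m n + i < oX m n" using i by (simp add: lay_defs)
  then show "g (oB m n + i) = b i t" using as dec_b[OF i] by simp
next
  fix j assume j: "j < n"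
  have "2 \<le> oC m n + j \<and> oC m n + j < oX m n" using j by (simp add: lay_defs)
  then show "g (oC m n + j) = c j t" using as dec_c[OF j] by simp
next
  have "2 \<le> vmu m n \<and> vmu m n < oX m n" by (simp add: lay_defs)
  then show "g (vmu m n) = mu t" using as dec_mu by simp
qed

lemma extr_dec:
  assumes as: "\<forall>k. oX m n \<le> k \<and> k < NN m n \<longrightarrow> g k = dec m n a bb cc mu x w y s k"
  shows "RSt m n A b c mu0 t (extr m n g) \<longleftrightarrow> RSt m n A b c mu0 t (x, w, y, s)"
  unfolding RSt_def extr_def split
proof (rule rsys_cong)
  show "\<forall>j<n. g (oX m n + j) = x j"
  proof (intro allI impI)
    fix j assume j: "j < n"
    have "oX m n \<le> oX m n + j \<and> oX m n + j < NN m n" unfolding lay_defs using j by linarith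
    then show "g (oX m n + j) = x j" using as dec_x[OF j] by simp
  qed
  show "\<forall>i<m. g (oW m n + i) = w i"
  proof (intro allI impI)
    fix i assume i: "i < m"
    have "oX m n \<le> oW m n + i \<and> oW m n + i < NN m n" unfolding lay_defs using i by linarith
    then show "g (oW m n + i) = w i" using as dec_w[OF i] by simp
  qed
  show "\<forall>i<m. g (oY m n + i) = y i"
  proof (intro allI impI)
    fix i assume i: "i < m"
    have "oX m n \<le> oY m n + i \<and> oY m n + i < NN m n" unfolding lay_defs using i by linarith
    then show "g (oY m n + i) = y i" using as dec_y[OF i] by simp
  qed
  show "\<forall>j<n. g (oS m n + j) = s j"
  proof (intro allI impI)
    fix j assume j: "j < n"
    have "oX m n \<le> oS m n + j \<and> oS m n + j < NN m n" unfolding lay_defs using j by linarith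
    then show "g (oS m n + j) = s j" using as dec_s[OF j] by simp
  qed
qed auto


lemma ev_agree:
  assumes "\<forall>k. k \<notin> set [2..<oX m n] \<longrightarrow> g k = ev t y k"
  shows "g 0 = t" "g 1 = y" "\<forall>k\<ge>NN m n. g k = 0"
proof -
  show "g 0 = t" using assms by (simp add: ev_def)
  show "g 1 = y" using assms by (simp add: ev_def)
  show "\<forall>k\<ge>NN m n. g k = 0"
  proof (intro allI impI)
    fix k assume "NN m n \<le> k"
    then have "k \<notin> set [2..<oX m n]" "k \<ge> 2" by (auto simp: lay_defs)
    then show "g k = 0" using assms by (simp add: ev_def)
  qed
qed

lemma Phi_sem:
  assumes dA: "\<forall>i<m. \<forall>j<n. defs (A i j) (\<phi>A i j)" and dB: "\<forall>i<m. defs (b i) (\<phi>b i)"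
    and dC: "\<forall>j<n. defs (c j) (\<phi>c j)" and dM: "defs mu \<phi>m"
    and v: "oX m n \<le> v" "v < NN m n"
    and selv: "\<forall>g. g v = sel (extr m n g)"
    and uniq: "\<forall>q q'. RSt m n A b c mu t q \<longrightarrow> RSt m n A b c mu t q' \<longrightarrow> sel q = sel q'"
  shows "sat (ev t y) (PhiF m n \<phi>A \<phi>b \<phi>c \<phi>m v) \<longleftrightarrow>
    (\<exists>q. RSt m n A b c mu t q \<and> sel q = y) \<or> ((\<not> (\<exists>q. RSt m n A b c mu t q)) \<and> y = 0)"
proof -
  let ?E = "ev t y"
  let ?DF = "DataF m n \<phi>A \<phi>b \<phi>c \<phi>m"
  let ?RS = "RSt m n A b c mu t"
  have DF: "sat g ?DF \<longleftrightarrow> dataeq m n A b c mu t g" if "\<forall>k. k \<notin> set [2..<oX m n] \<longrightarrow> g k = ?E k" for g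
    using sat_DataF[OF dA dB dC dM ev_agree(3)[OF that]] ev_agree(1)[OF that] by simp
  have keep: "dataeq m n A b c mu t g'" if "dataeq m n A b c mu t g" "\<forall>k. k \<notin> set [oX m n..<NN m n] \<longrightarrow> g' k = g k" for g g'
    using dataeq_keep[OF that(1)] that(2) by auto
  have L: "sat ?E (Exs [2..<oX m n] (Conj ?DF (Exs [oX m n..<NN m n] (Conj (SysF m n) (Eq (Var v) (Var 1)))))) \<longleftrightarrow>
     (\<exists>q. ?RS q \<and> sel q = y)"
  proof
    assume "sat ?E (Exs [2..<oX m n] (Conj ?DF (Exs [oX m n..<NN m n] (Conj (SysF m n) (Eq (Var v) (Var 1))))))"
    then obtain g where ga: "\<forall>k. k \<notin> set [2..<oX m n] \<longrightarrow> g k = ?E k" and gD: "sat g ?DF"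
      and gS: "sat g (Exs [oX m n..<NN m n] (Conj (SysF m n) (Eq (Var v) (Var 1))))"
      unfolding sat_Exs[of ?E] sat.simps(4) by blast
    have de: "dataeq m n A b c mu t g" using DF[OF ga] gD by simp
    obtain g' where ga': "\<forall>k. k \<notin> set [oX m n..<NN m n] \<longrightarrow> g' k = g k" and gS': "sat g' (SysF m n)"
      and gv: "g' v = g' 1"
      using gS unfolding sat_Exs by auto
    have de': "dataeq m n A b c mu t g'" using keep[OF de ga'] .
    have "?RS (extr m n g')" using sys_RS[OF de'] gS' by simp
    moreover have "g' 1 = y" using ga' ev_agree(2)[OF ga] by (simp add: lay_defs)
    ultimately show "\<exists>q. ?RS q \<and> sel q = y" using selv gv by metis
  next
    assume "\<exists>q. ?RS q \<and> sel q = y"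
    then obtain x w yy s where q: "?RS (x, w, yy, s)" "sel (x, w, yy, s) = y" by auto
    define G where "G = dec m n (\<lambda>i j. A i j t) (\<lambda>i. b i t) (\<lambda>j. c j t) (mu t) x w yy s"
    define g where "g k = (if 2 \<le> k \<and> k < oX m n then G k else ?E k)" for k
    define g' where "g' k = (if 2 \<le> k \<and> k < NN m n then G k else ?E k)" for k
    have ga: "\<forall>k. k \<notin> set [2..<oX m n] \<longrightarrow> g k = ?E k" unfolding g_def by auto
    have de: "dataeq m n A b c mu t g" by (rule dataeq_dec[where x=x and w=w and y=yy and s=s]) (simp add: g_def G_def)
    have ga': "\<forall>k. k \<notin> set [oX m n..<NN m n] \<longrightarrow> g' k = g k" unfolding g_def g'_def by (auto simp: lay_defs)
    have de': "dataeq m n A b c mu t g'" using keep[OF de ga'] .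
    have "\<forall>k. oX m n \<le> k \<and> k < NN m n \<longrightarrow> g' k = G k" unfolding g'_def by (auto simp: lay_defs)
    then have rs: "?RS (extr m n g')" using extr_dec[of m n g' _ _ _ _ x w yy s A b c mu t] q(1) unfolding G_def by blast
    have gS': "sat g' (SysF m n)" using sys_RS[OF de'] rs by simp
    have "g' v = y" using selv uniq rs q by metis
    moreover have "g' 1 = y" unfolding g'_def by (simp add: ev_def)
    ultimately have "sat g' (Conj (SysF m n) (Eq (Var v) (Var 1)))" using gS' by simp
    then have "sat g (Exs [oX m n..<NN m n] (Conj (SysF m n) (Eq (Var v) (Var 1))))"
      unfolding sat_Exs using ga' by blast
    moreover have "sat g ?DF" using DF[OF ga] de by simp
    ultimately show "sat ?E (Exs [2..<oX m n] (Conj ?DF (Exs [oX m n..<NN m n] (Conj (SysF m n) (Eq (Var v) (Var 1))))))"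
      unfolding sat_Exs[of ?E] using ga by auto
  qed
  have R: "sat ?E (Conj (Exs [2..<oX m n] (Conj ?DF (Neg (Exs [oX m n..<NN m n] (SysF m n))))) (Eq (Var 1) (Cst 0))) \<longleftrightarrow>
     (\<not> (\<exists>q. ?RS q)) \<and> y = 0"
  proof
    assume as: "sat ?E (Conj (Exs [2..<oX m n] (Conj ?DF (Neg (Exs [oX m n..<NN m n] (SysF m n))))) (Eq (Var 1) (Cst 0)))"
    then have y0: "y = 0" by (simp add: ev_def)
    obtain g where ga: "\<forall>k. k \<notin> set [2..<oX m n] \<longrightarrow> g k = ?E k" and gD: "sat g ?DF"
      and gN: "\<not> sat g (Exs [oX m n..<NN m n] (SysF m n))"
      using as unfolding sat.simps(3,4) sat_Exs[of ?E] by blast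
    have de: "dataeq m n A b c mu t g" using DF[OF ga] gD by simp
    have "\<not> (\<exists>q. ?RS q)"
    proof
      assume "\<exists>q. ?RS q"
      then obtain x w yy s where q: "?RS (x, w, yy, s)" by auto
      define G where "G = dec m n (\<lambda>i j. A i j t) (\<lambda>i. b i t) (\<lambda>j. c j t) (mu t) x w yy s"
      define g' where "g' k = (if oX m n \<le> k \<and> k < NN m n then G k else g k)" for k
      have ga': "\<forall>k. k \<notin> set [oX m n..<NN m n] \<longrightarrow> g' k = g k" unfolding g'_def by auto
      have de': "dataeq m n A b c mu t g'" using keep[OF de ga'] .
      have "\<forall>k. oX m n \<le> k \<and> k < NN m n \<longrightarrow> g' k = G k" unfolding g'_def by auto
      then have rs: "?RS (extr m n g')" using extr_dec[of m n g' _ _ _ _ x w yy s A b c mu t] q unfolding G_def by blast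
      have "sat g' (SysF m n)" using sys_RS[OF de'] rs by simp
      then have "sat g (Exs [oX m n..<NN m n] (SysF m n))" unfolding sat_Exs using ga' by blast
      then show False using gN by simp
    qed
    then show "(\<not> (\<exists>q. ?RS q)) \<and> y = 0" using y0 by simp
  next
    assume as: "(\<not> (\<exists>q. ?RS q)) \<and> y = 0"
    define G where "G = dec m n (\<lambda>i j. A i j t) (\<lambda>i. b i t) (\<lambda>j. c j t) (mu t) (\<lambda>_. 0) (\<lambda>_. 0) (\<lambda>_. 0) (\<lambda>_. 0)"
    define g where "g k = (if 2 \<le> k \<and> k < oX m n then G k else ?E k)" for k
    have ga: "\<forall>k. k \<notin> set [2..<oX m n] \<longrightarrow> g k = ?E k" unfolding g_def by auto
    have de: "dataeq m n A b c mu t g" by (rule dataeq_dec[where x="\<lambda>_. 0" and w="\<lambda>_. 0" and y="\<lambda>_. 0" and s="\<lambda>_. 0"]) (simp add: g_def G_def)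
    have "\<not> sat g (Exs [oX m n..<NN m n] (SysF m n))"
    proof
      assume "sat g (Exs [oX m n..<NN m n] (SysF m n))"
      then obtain g' where ga': "\<forall>k. k \<notin> set [oX m n..<NN m n] \<longrightarrow> g' k = g k" and gS': "sat g' (SysF m n)"
        unfolding sat_Exs by auto
      have de': "dataeq m n A b c mu t g'" using keep[OF de ga'] .
      have "?RS (extr m n g')" using sys_RS[OF de'] gS' by simp
      then show False using as by blast
    qed
    moreover have "sat g ?DF" using DF[OF ga] de by simp
    ultimately have "sat ?E (Exs [2..<oX m n] (Conj ?DF (Neg (Exs [oX m n..<NN m n] (SysF m n)))))"
      unfolding sat_Exs[of ?E] using ga by auto
    then show "sat ?E (Conj (Exs [2..<oX m n] (Conj ?DF (Neg (Exs [oX m n..<NN m n] (SysF m n))))) (Eq (Var 1) (Cst 0)))"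
      using as by (simp add: ev_def)
  qed
  show ?thesis unfolding PhiF_def sat_Disj using L R by blast
qed

lemma inK_sel:
  assumes dA: "\<forall>i<m. \<forall>j<n. defs (A i j) (\<phi>A i j)" and dB: "\<forall>i<m. defs (b i) (\<phi>b i)"
    and dC: "\<forall>j<n. defs (c j) (\<phi>c j)" and dM: "defs mu \<phi>m"
    and v: "oX m n \<le> v" "v < NN m n"
    and selv: "\<forall>g. g v = sel (extr m n g)"
    and uniq: "\<forall>t q q'. RSt m n A b c mu t q \<longrightarrow> RSt m n A b c mu t q' \<longrightarrow> sel q = sel q'"
  shows "inK (\<lambda>t. if \<exists>q. RSt m n A b c mu t q then sel (SOME q. RSt m n A b c mu t q) else 0)"
  unfolding inK_def
proof (intro exI allI)
  fix t y
  have env: "(\<lambda>k. if k = 0 then t else if k = 1 then y else 0) = ev t y" by (simp add: ev_def)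
  have S: "sat (ev t y) (PhiF m n \<phi>A \<phi>b \<phi>c \<phi>m v) \<longleftrightarrow>
    (\<exists>q. RSt m n A b c mu t q \<and> sel q = y) \<or> ((\<not> (\<exists>q. RSt m n A b c mu t q)) \<and> y = 0)"
    using Phi_sem[OF dA dB dC dM v selv] uniq by blast
  show "((if \<exists>q. RSt m n A b c mu t q then sel (SOME q. RSt m n A b c mu t q) else 0) = y) \<longleftrightarrow>
     sat (\<lambda>k. if k = 0 then t else if k = 1 then y else 0) (PhiF m n \<phi>A \<phi>b \<phi>c \<phi>m v)"
  proof (cases "\<exists>q. RSt m n A b c mu t q")
    case True
    then have sq: "RSt m n A b c mu t (SOME q. RSt m n A b c mu t q)" by (rule someI_ex)
    have "(\<exists>q. RSt m n A b c mu t q \<and> sel q = y) \<longleftrightarrow> sel (SOME q. RSt m n A b c mu t q) = y"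
      using sq uniq by metis
    then show ?thesis unfolding env S using True by simp
  next
    case False
    then show ?thesis unfolding env S by simp
  qed
qed


lemma inK_defs: "inK F \<Longrightarrow> defs F (SOME \<phi>. defs F \<phi>)"
proof -
  assume "inK F"
  then have "\<exists>\<phi>. defs F \<phi>" unfolding inK_def defs_def ev_def by simp
  then show ?thesis by (rule someI_ex)
qed

lemma ev_all: fixes m :: nat shows "(\<forall>i<m. eventually (P i) F) \<Longrightarrow> eventually (\<lambda>t. \<forall>i<m. P i t) F"
proof -
  assume h: "\<forall>i<m. eventually (P i) F"
  have "eventually (\<lambda>t. \<forall>i\<in>{..<m}. P i t) F" by (rule eventually_ball_finite) (use h in auto)
  then show ?thesis by (rule eventually_mono) auto
qed

lemma central_germ:
  assumes "central_point m n A b c \<mu> x w y s"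
  shows "eventually (\<lambda>t. rsys m n (\<lambda>i j. A i j t) (\<lambda>i. b i t) (\<lambda>j. c j t) (\<mu> t)
     (\<lambda>j. x j t) (\<lambda>i. w i t) (\<lambda>i. y i t) (\<lambda>j. s j t)) at_top"
proof -
  note C = assms[unfolded central_point_def vec_pos_def primal_eq_def dual_eq_def germ_pos_def germ_eq_def]
  have e1: "eventually (\<lambda>t. \<forall>j<n. x j t > 0) at_top" using C by (intro ev_all) blast
  have e2: "eventually (\<lambda>t. \<forall>i<m. w i t > 0) at_top" using C by (intro ev_all) blast
  have e3: "eventually (\<lambda>t. \<forall>i<m. y i t > 0) at_top" using C by (intro ev_all) blast
  have e4: "eventually (\<lambda>t. \<forall>j<n. s j t > 0) at_top" using C by (intro ev_all) blast
  have e5: "eventually (\<lambda>t. \<forall>i<m. (\<Sum>j<n. A i j t * x j t) + w i t = b i t) at_top" using C by (intro ev_all) blast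
  have e6: "eventually (\<lambda>t. \<forall>j<n. - (\<Sum>i<m. A i j t * y i t) + s j t = c j t) at_top" using C by (intro ev_all) blast
  have e7: "eventually (\<lambda>t. \<forall>i<m. w i t * y i t = \<mu> t) at_top" using C by (intro ev_all) blast
  have e8: "eventually (\<lambda>t. \<forall>j<n. x j t * s j t = \<mu> t) at_top" using C by (intro ev_all) blast
  show ?thesis
    using e1 e2 e3 e4 e5 e6 e7 e8 unfolding rsys_def
    by eventually_elim blast
qed

lemma primal_obj_eq: "primal_obj m n c \<mu> x w t = pobjr m n (\<lambda>j. c j t) (\<mu> t) (\<lambda>j. x j t) (\<lambda>i. w i t)"
  unfolding primal_obj_def pobjr_def by simp

lemma dual_obj_eq: "dual_obj m n b \<mu> y s t = dobjr m n (\<lambda>i. b i t) (\<mu> t) (\<lambda>i. y i t) (\<lambda>j. s j t)"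
  unfolding dual_obj_def dobjr_def by simp

lemma pfeas_germ:
  assumes "primal_feasible m n A b x w"
  shows "eventually (\<lambda>t. (\<forall>j<n. x j t > 0) \<and> (\<forall>i<m. w i t > 0) \<and>
     (\<forall>i<m. (\<Sum>j<n. A i j t * x j t) + w i t = b i t)) at_top"
proof -
  note C = assms[unfolded primal_feasible_def vec_pos_def primal_eq_def germ_pos_def germ_eq_def]
  have e1: "eventually (\<lambda>t. \<forall>j<n. x j t > 0) at_top" using C by (intro ev_all) blast
  have e2: "eventually (\<lambda>t. \<forall>i<m. w i t > 0) at_top" using C by (intro ev_all) blast
  have e5: "eventually (\<lambda>t. \<forall>i<m. (\<Sum>j<n. A i j t * x j t) + w i t = b i t) at_top" using C by (intro ev_all) blast
  show ?thesis using e1 e2 e5 by eventually_elim blast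
qed

lemma dfeas_germ:
  assumes "dual_feasible m n A c y s"
  shows "eventually (\<lambda>t. (\<forall>i<m. y i t > 0) \<and> (\<forall>j<n. s j t > 0) \<and>
     (\<forall>j<n. - (\<Sum>i<m. A i j t * y i t) + s j t = c j t)) at_top"
proof -
  note C = assms[unfolded dual_feasible_def vec_pos_def dual_eq_def germ_pos_def germ_eq_def]
  have e1: "eventually (\<lambda>t. \<forall>i<m. y i t > 0) at_top" using C by (intro ev_all) blast
  have e2: "eventually (\<lambda>t. \<forall>j<n. s j t > 0) at_top" using C by (intro ev_all) blast
  have e5: "eventually (\<lambda>t. \<forall>j<n. - (\<Sum>i<m. A i j t * y i t) + s j t = c j t) at_top" using C by (intro ev_all) blast
  show ?thesis using e1 e2 e5 by eventually_elim blast
qed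

lemma part2:
  assumes cp: "central_point m n A b c \<mu> x w y s"
  shows "primal_optimal m n A b c \<mu> x w \<and>
       (\<forall>x' w'. primal_optimal m n A b c \<mu> x' w' \<longrightarrow>
          (\<forall>j<n. germ_eq (x' j) (x j)) \<and> (\<forall>i<m. germ_eq (w' i) (w i))) \<and>
       dual_optimal m n A b c \<mu> y s \<and>
       (\<forall>y' s'. dual_optimal m n A b c \<mu> y' s' \<longrightarrow>
          (\<forall>i<m. germ_eq (y' i) (y i)) \<and> (\<forall>j<n. germ_eq (s' j) (s j)))"
proof -
  have R: "eventually (\<lambda>t. rsys m n (\<lambda>i j. A i j t) (\<lambda>i. b i t) (\<lambda>j. c j t) (\<mu> t)
     (\<lambda>j. x j t) (\<lambda>i. w i t) (\<lambda>i. y i t) (\<lambda>j. s j t)) at_top" using central_germ[OF cp] .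
  have pf: "primal_feasible m n A b x w" using cp unfolding central_point_def primal_feasible_def by blast
  have df: "dual_feasible m n A c y s" using cp unfolding central_point_def dual_feasible_def by blast
  have P1: "germ_le (primal_obj m n c \<mu> x w) (primal_obj m n c \<mu> x' w')" if "primal_feasible m n A b x' w'" for x' w'
    unfolding germ_le_def primal_obj_eq using R pfeas_germ[OF that]
    by eventually_elim (intro primal_pt(1), blast+)
  have D1: "germ_le (dual_obj m n b \<mu> y' s') (dual_obj m n b \<mu> y s)" if "dual_feasible m n A c y' s'" for y' s'
    unfolding germ_le_def dual_obj_eq using R dfeas_germ[OF that]
    by eventually_elim (intro dual_pt(1), blast+)
  have popt: "primal_optimal m n A b c \<mu> x w" unfolding primal_optimal_def using pf P1 by blast
  have dopt: "dual_optimal m n A b c \<mu> y s" unfolding dual_optimal_def using df D1 by blast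
  have PU: "(\<forall>j<n. germ_eq (x' j) (x j)) \<and> (\<forall>i<m. germ_eq (w' i) (w i))"
    if "primal_optimal m n A b c \<mu> x' w'" for x' w'
  proof -
    have f': "primal_feasible m n A b x' w'" using that unfolding primal_optimal_def by blast
    have le: "germ_le (primal_obj m n c \<mu> x' w') (primal_obj m n c \<mu> x w)"
      using that pf unfolding primal_optimal_def by blast
    have E: "eventually (\<lambda>t. (\<forall>j<n. x' j t = x j t) \<and> (\<forall>i<m. w' i t = w i t)) at_top"
      using R pfeas_germ[OF f'] le unfolding germ_le_def primal_obj_eq
      by eventually_elim (rule primal_pt(2), blast+)
    show ?thesis unfolding germ_eq_def
    proof (intro conjI allI impI)
      fix j assume "j < n" then show "\<forall>\<^sub>F t in at_top. x' j t = x j t" using E by (rule_tac eventually_mono[OF E]) auto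
    next
      fix i assume "i < m" then show "\<forall>\<^sub>F t in at_top. w' i t = w i t" using E by (rule_tac eventually_mono[OF E]) auto
    qed
  qed
  have DU: "(\<forall>i<m. germ_eq (y' i) (y i)) \<and> (\<forall>j<n. germ_eq (s' j) (s j))"
    if "dual_optimal m n A b c \<mu> y' s'" for y' s'
  proof -
    have f': "dual_feasible m n A c y' s'" using that unfolding dual_optimal_def by blast
    have le: "germ_le (dual_obj m n b \<mu> y s) (dual_obj m n b \<mu> y' s')"
      using that df unfolding dual_optimal_def by blast
    have E: "eventually (\<lambda>t. (\<forall>i<m. y' i t = y i t) \<and> (\<forall>j<n. s' j t = s j t)) at_top"
      using R dfeas_germ[OF f'] le unfolding germ_le_def dual_obj_eq
      by eventually_elim (rule dual_pt(2), blast+)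
    show ?thesis unfolding germ_eq_def
    proof (intro conjI allI impI)
      fix i assume "i < m" then show "\<forall>\<^sub>F t in at_top. y' i t = y i t" using E by (rule_tac eventually_mono[OF E]) auto
    next
      fix j assume "j < n" then show "\<forall>\<^sub>F t in at_top. s' j t = s j t" using E by (rule_tac eventually_mono[OF E]) auto
    qed
  qed
  show ?thesis using popt dopt PU DU by blast
qed


lemma RSt_unique:
  assumes "RSt m n A b c mu t (x, w, y, s)" "RSt m n A b c mu t (x', w', y', s')"
  shows "(\<forall>j<n. x' j = x j) \<and> (\<forall>i<m. w' i = w i) \<and> (\<forall>i<m. y' i = y i) \<and> (\<forall>j<n. s' j = s j)"
  using rsys_unique assms unfolding RSt_def by auto

lemma part1:
  assumes mA: "matK m n A" and vb: "vecK m b" and vc: "vecK n c"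
    and aA: "assumption_A m n A b c" and iM: "inK \<mu>" and pM: "germ_pos \<mu>"
  shows "\<exists>x w y s. central_point m n A b c \<mu> x w y s"
proof -
  define \<phi>A where "\<phi>A i j = (SOME \<phi>. defs (A i j) \<phi>)" for i j
  define \<phi>b where "\<phi>b i = (SOME \<phi>. defs (b i) \<phi>)" for i
  define \<phi>c where "\<phi>c j = (SOME \<phi>. defs (c j) \<phi>)" for j
  define \<phi>m where "\<phi>m = (SOME \<phi>. defs \<mu> \<phi>)"
  have dA: "\<forall>i<m. \<forall>j<n. defs (A i j) (\<phi>A i j)" using mA inK_defs unfolding matK_def \<phi>A_def by blast
  have dB: "\<forall>i<m. defs (b i) (\<phi>b i)" using vb inK_defs unfolding vecK_def \<phi>b_def by blast
  have dC: "\<forall>j<n. defs (c j) (\<phi>c j)" using vc inK_defs unfolding vecK_def \<phi>c_def by blast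
  have dM: "defs \<mu> \<phi>m" using iM inK_defs unfolding \<phi>m_def by blast
  let ?RS = "RSt m n A b c \<mu>"
  define X where "X j = (\<lambda>t. if \<exists>q. ?RS t q then (case (SOME q. ?RS t q) of (x, w, y, s) \<Rightarrow> x j) else 0)" for j
  define Wv where "Wv i = (\<lambda>t. if \<exists>q. ?RS t q then (case (SOME q. ?RS t q) of (x, w, y, s) \<Rightarrow> w i) else 0)" for i
  define Yv where "Yv i = (\<lambda>t. if \<exists>q. ?RS t q then (case (SOME q. ?RS t q) of (x, w, y, s) \<Rightarrow> y i) else 0)" for i
  define Sv where "Sv j = (\<lambda>t. if \<exists>q. ?RS t q then (case (SOME q. ?RS t q) of (x, w, y, s) \<Rightarrow> s j) else 0)" for j
  have iX: "inK (X j)" if j: "j < n" for j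
    unfolding X_def
  proof (rule inK_sel[OF dA dB dC dM, where v = "oX m n + j"])
    show "oX m n \<le> oX m n + j" by simp
    show "oX m n + j < NN m n" unfolding lay_defs using j by linarith
    show "\<forall>g. g (oX m n + j) = (case extr m n g of (x, w, y, s) \<Rightarrow> x j)" by (simp add: extr_def)
    show "\<forall>t q q'. ?RS t q \<longrightarrow> ?RS t q' \<longrightarrow> (case q of (x, w, y, s) \<Rightarrow> x j) = (case q' of (x, w, y, s) \<Rightarrow> x j)"
    proof (intro allI impI)
      fix t q q' assume "?RS t q" "?RS t q'"
      moreover obtain x w y s where q: "q = (x, w, y, s)" by (cases q) auto
      moreover obtain x' w' y' s' where q': "q' = (x', w', y', s')" by (cases q') auto
      ultimately have "x' j = x j" using RSt_unique[of m n A b c \<mu> t x w y s x' w' y' s'] j by auto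
      then show "(case q of (x, w, y, s) \<Rightarrow> x j) = (case q' of (x, w, y, s) \<Rightarrow> x j)"
        using q q' by simp
    qed
  qed
  have iW: "inK (Wv i)" if i: "i < m" for i
    unfolding Wv_def
  proof (rule inK_sel[OF dA dB dC dM, where v = "oW m n + i"])
    show "oX m n \<le> oW m n + i" unfolding lay_defs by simp
    show "oW m n + i < NN m n" unfolding lay_defs using i by linarith
    show "\<forall>g. g (oW m n + i) = (case extr m n g of (x, w, y, s) \<Rightarrow> w i)" by (simp add: extr_def)
    show "\<forall>t q q'. ?RS t q \<longrightarrow> ?RS t q' \<longrightarrow> (case q of (x, w, y, s) \<Rightarrow> w i) = (case q' of (x, w, y, s) \<Rightarrow> w i)"
    proof (intro allI impI)
      fix t q q' assume "?RS t q" "?RS t q'"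
      moreover obtain x w y s where q: "q = (x, w, y, s)" by (cases q) auto
      moreover obtain x' w' y' s' where q': "q' = (x', w', y', s')" by (cases q') auto
      ultimately have "w' i = w i" using RSt_unique[of m n A b c \<mu> t x w y s x' w' y' s'] i by auto
      then show "(case q of (x, w, y, s) \<Rightarrow> w i) = (case q' of (x, w, y, s) \<Rightarrow> w i)"
        using q q' by simp
    qed
  qed
  have iY: "inK (Yv i)" if i: "i < m" for i
    unfolding Yv_def
  proof (rule inK_sel[OF dA dB dC dM, where v = "oY m n + i"])
    show "oX m n \<le> oY m n + i" unfolding lay_defs by simp
    show "oY m n + i < NN m n" unfolding lay_defs using i by linarith
    show "\<forall>g. g (oY m n + i) = (case extr m n g of (x, w, y, s) \<Rightarrow> y i)" by (simp add: extr_def)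
    show "\<forall>t q q'. ?RS t q \<longrightarrow> ?RS t q' \<longrightarrow> (case q of (x, w, y, s) \<Rightarrow> y i) = (case q' of (x, w, y, s) \<Rightarrow> y i)"
    proof (intro allI impI)
      fix t q q' assume "?RS t q" "?RS t q'"
      moreover obtain x w y s where q: "q = (x, w, y, s)" by (cases q) auto
      moreover obtain x' w' y' s' where q': "q' = (x', w', y', s')" by (cases q') auto
      ultimately have "y' i = y i" using RSt_unique[of m n A b c \<mu> t x w y s x' w' y' s'] i by auto
      then show "(case q of (x, w, y, s) \<Rightarrow> y i) = (case q' of (x, w, y, s) \<Rightarrow> y i)"
        using q q' by simp
    qed
  qed
  have iS: "inK (Sv j)" if j: "j < n" for j
    unfolding Sv_def
  proof (rule inK_sel[OF dA dB dC dM, where v = "oS m n + j"])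
    show "oX m n \<le> oS m n + j" unfolding lay_defs by simp
    show "oS m n + j < NN m n" unfolding lay_defs using j by linarith
    show "\<forall>g. g (oS m n + j) = (case extr m n g of (x, w, y, s) \<Rightarrow> s j)" by (simp add: extr_def)
    show "\<forall>t q q'. ?RS t q \<longrightarrow> ?RS t q' \<longrightarrow> (case q of (x, w, y, s) \<Rightarrow> s j) = (case q' of (x, w, y, s) \<Rightarrow> s j)"
    proof (intro allI impI)
      fix t q q' assume "?RS t q" "?RS t q'"
      moreover obtain x w y s where q: "q = (x, w, y, s)" by (cases q) auto
      moreover obtain x' w' y' s' where q': "q' = (x', w', y', s')" by (cases q') auto
      ultimately have "s' j = s j" using RSt_unique[of m n A b c \<mu> t x w y s x' w' y' s'] j by auto
      then show "(case q of (x, w, y, s) \<Rightarrow> s j) = (case q' of (x, w, y, s) \<Rightarrow> s j)"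
        using q q' by simp
    qed
  qed
  obtain x0 w0 y0 s0 where pos: "vec_pos n x0" "vec_pos m w0" "vec_pos m y0" "vec_pos n s0"
    and pe: "primal_eq m n A b x0 w0" and de: "dual_eq m n A c y0 s0"
    using aA unfolding assumption_A_def by blast
  have e1: "eventually (\<lambda>t. \<forall>j<n. x0 j t > 0) at_top" using pos(1) unfolding vec_pos_def germ_pos_def by (intro ev_all)
  have e2: "eventually (\<lambda>t. \<forall>i<m. w0 i t > 0) at_top" using pos(2) unfolding vec_pos_def germ_pos_def by (intro ev_all)
  have e3: "eventually (\<lambda>t. \<forall>i<m. y0 i t > 0) at_top" using pos(3) unfolding vec_pos_def germ_pos_def by (intro ev_all)
  have e4: "eventually (\<lambda>t. \<forall>j<n. s0 j t > 0) at_top" using pos(4) unfolding vec_pos_def germ_pos_def by (intro ev_all)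
  have e5: "eventually (\<lambda>t. \<forall>i<m. (\<Sum>j<n. A i j t * x0 j t) + w0 i t = b i t) at_top"
    using pe unfolding primal_eq_def germ_eq_def by (intro ev_all)
  have e6: "eventually (\<lambda>t. \<forall>j<n. - (\<Sum>i<m. A i j t * y0 i t) + s0 j t = c j t) at_top"
    using de unfolding dual_eq_def germ_eq_def by (intro ev_all)
  have e7: "eventually (\<lambda>t. \<mu> t > 0) at_top" using pM unfolding germ_pos_def .
  have EV: "eventually (\<lambda>t. \<exists>q. ?RS t q) at_top"
    using e1 e2 e3 e4 e5 e6 e7
  proof eventually_elim
    case (elim t)
    obtain x w y s where "rsys m n (\<lambda>i j. A i j t) (\<lambda>i. b i t) (\<lambda>j. c j t) (\<mu> t) x w y s"
      using central_exists[of "\<mu> t" n "\<lambda>j. x0 j t" m "\<lambda>i. w0 i t" "\<lambda>i. y0 i t" "\<lambda>j. s0 j t"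
          "\<lambda>i j. A i j t" "\<lambda>i. b i t" "\<lambda>j. c j t"] elim by blast
    then have "?RS t (x, w, y, s)" unfolding RSt_def by simp
    then show ?case by blast
  qed
  have EVR: "eventually (\<lambda>t. rsys m n (\<lambda>i j. A i j t) (\<lambda>i. b i t) (\<lambda>j. c j t) (\<mu> t)
     (\<lambda>j. X j t) (\<lambda>i. Wv i t) (\<lambda>i. Yv i t) (\<lambda>j. Sv j t)) at_top"
    using EV
  proof eventually_elim
    case (elim t)
    then have sq: "?RS t (SOME q. ?RS t q)" by (rule someI_ex)
    obtain x w y s where qe: "(SOME q. ?RS t q) = (x, w, y, s)" by (cases "SOME q. ?RS t q") auto
    have "(\<lambda>j. X j t) = x" "(\<lambda>i. Wv i t) = w" "(\<lambda>i. Yv i t) = y" "(\<lambda>j. Sv j t) = s"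
      unfolding X_def Wv_def Yv_def Sv_def using elim qe by auto
    then show ?case using sq qe unfolding RSt_def by simp
  qed
  have P: "eventually (\<lambda>t. (\<forall>j<n. X j t > 0) \<and> (\<forall>i<m. Wv i t > 0) \<and> (\<forall>i<m. Yv i t > 0) \<and> (\<forall>j<n. Sv j t > 0) \<and>
    (\<forall>i<m. (\<Sum>j<n. A i j t * X j t) + Wv i t = b i t) \<and> (\<forall>j<n. - (\<Sum>i<m. A i j t * Yv i t) + Sv j t = c j t) \<and>
    (\<forall>i<m. Wv i t * Yv i t = \<mu> t) \<and> (\<forall>j<n. X j t * Sv j t = \<mu> t)) at_top"
    using EVR by (rule eventually_mono) (simp only: rsys_def)
  have "central_point m n A b c \<mu> X Wv Yv Sv"
    unfolding central_point_def vecK_def vec_pos_def primal_eq_def dual_eq_def germ_pos_def germ_eq_def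
  proof (intro conjI allI impI)
    show "\<And>j. j < n \<Longrightarrow> inK (X j)" using iX .
    show "\<And>i. i < m \<Longrightarrow> inK (Wv i)" using iW .
    show "\<And>i. i < m \<Longrightarrow> inK (Yv i)" using iY .
    show "\<And>j. j < n \<Longrightarrow> inK (Sv j)" using iS .
    show "\<And>j. j < n \<Longrightarrow> \<forall>\<^sub>F t in at_top. X j t > 0" by (rule eventually_mono[OF P]) blast
    show "\<And>i. i < m \<Longrightarrow> \<forall>\<^sub>F t in at_top. Wv i t > 0" by (rule eventually_mono[OF P]) blast
    show "\<And>i. i < m \<Longrightarrow> \<forall>\<^sub>F t in at_top. Yv i t > 0" by (rule eventually_mono[OF P]) blast
    show "\<And>j. j < n \<Longrightarrow> \<forall>\<^sub>F t in at_top. Sv j t > 0" by (rule eventually_mono[OF P]) blast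
    show "\<And>i. i < m \<Longrightarrow> \<forall>\<^sub>F t in at_top. (\<Sum>j<n. A i j t * X j t) + Wv i t = b i t"
      by (rule eventually_mono[OF P]) blast
    show "\<And>j. j < n \<Longrightarrow> \<forall>\<^sub>F t in at_top. - (\<Sum>i<m. A i j t * Yv i t) + Sv j t = c j t"
      by (rule eventually_mono[OF P]) blast
    show "\<And>i. i < m \<Longrightarrow> \<forall>\<^sub>F t in at_top. Wv i t * Yv i t = \<mu> t"
      by (rule eventually_mono[OF P]) blast
    show "\<And>j. j < n \<Longrightarrow> \<forall>\<^sub>F t in at_top. X j t * Sv j t = \<mu> t"
      by (rule eventually_mono[OF P]) blast
  qed
  then show ?thesis by blast
qed


theorem mainTheorem4:
  fixes m n :: nat and A :: gmat and b c :: gvec and \<mu> :: "real \<Rightarrow> real"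
  assumes "matK m n A" and "vecK m b" and "vecK n c"
    and "assumption_A m n A b c"
    and "inK \<mu>" and "germ_pos \<mu>"
  shows "(\<exists>x w y s. central_point m n A b c \<mu> x w y s) \<and>
    (\<forall>x w y s. central_point m n A b c \<mu> x w y s \<longrightarrow>
       primal_optimal m n A b c \<mu> x w \<and>
       (\<forall>x' w'. primal_optimal m n A b c \<mu> x' w' \<longrightarrow>
          (\<forall>j<n. germ_eq (x' j) (x j)) \<and> (\<forall>i<m. germ_eq (w' i) (w i))) \<and>
       dual_optimal m n A b c \<mu> y s \<and>
       (\<forall>y' s'. dual_optimal m n A b c \<mu> y' s' \<longrightarrow>
          (\<forall>i<m. germ_eq (y' i) (y i)) \<and> (\<forall>j<n. germ_eq (s' j) (s j))))"
  proof -
  have "\<exists>x w y s. central_point m n A b c \<mu> x w y s" by (rule part1[OF assms])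
  moreover have "\<forall>x w y s. central_point m n A b c \<mu> x w y s \<longrightarrow>
       primal_optimal m n A b c \<mu> x w \<and>
       (\<forall>x' w'. primal_optimal m n A b c \<mu> x' w' \<longrightarrow>
          (\<forall>j<n. germ_eq (x' j) (x j)) \<and> (\<forall>i<m. germ_eq (w' i) (w i))) \<and>
       dual_optimal m n A b c \<mu> y s \<and>
       (\<forall>y' s'. dual_optimal m n A b c \<mu> y' s' \<longrightarrow>
          (\<forall>i<m. germ_eq (y' i) (y i)) \<and> (\<forall>j<n. germ_eq (s' j) (s j)))"
    using part2 by blast
  ultimately show ?thesis by blast
qed

end
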